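(* The following identity of formal series holds: $$\frac{\prod_{i=0}^\infty(1+zq^i)\prod_{i=1}^\infty(1+z^{-1}q^i)}{\prod_{i=0}^\infty(1-z^{-1}q^i)\prod_{i=1}^\infty(1-zq^i)}=\frac{\prod_{i=1}^\infty(1+z^2q^i)\prod_{i=1}^\infty(1+z^{-2}q^i)}{\prod_{i=1}^\infty(1-q^i)^2}\Bigl(1+(1+z^2)\sum_{r=1}^\infty\Bigl[\frac{z^{-r}}{1+z^2q^r}+\frac{q^rz^{r-2}}{1+z^{-2}q^r}\Bigr]\Bigr).$$ Here both sides are regarded as formal power series in $q$ whose coefficients are Laurent series in $z^{-1}$. The factor $1/(1-z^{-1})$ is expanded as $\sum_{n\ge0}z^{-n}$, and all other factors are expanded in powers of $q$. *)

theory Defs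
  imports "HOL-Computational_Algebra.Formal_Laurent_Series"
begin

text \<open>Formal series in q whose coefficients are Laurent series in w = z^(-1):
  type 'a fls fps.  The coefficient ring 'a fls carries the w-adic topology
  (library metric on fls).\<close>

definition qz_tendsto :: "(nat \<Rightarrow> 'a::field fls fps) \<Rightarrow> 'a fls fps \<Rightarrow> bool" where
  "qz_tendsto S L \<longleftrightarrow> (\<forall>n. (\<lambda>m. fps_nth (S m) n) \<longlonglongrightarrow> fps_nth L n)"

definition qz_lim :: "(nat \<Rightarrow> 'a::field fls fps) \<Rightarrow> 'a fls fps" where
  "qz_lim S = (THE L. qz_tendsto S L)"

definition qz_prodinf :: "(nat \<Rightarrow> 'a::field fls fps) \<Rightarrow> 'a fls fps" where
  "qz_prodinf f = qz_lim (\<lambda>N. \<Prod>i<N. f i)"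

definition qz_suminf :: "(nat \<Rightarrow> 'a::field fls fps) \<Rightarrow> 'a fls fps" where
  "qz_suminf f = qz_lim (\<lambda>N. \<Sum>i<N. f i)"

definition zpow :: "int \<Rightarrow> 'a::field fls fps" where
  "zpow k = fps_const (fls_X_inv powi k)"

end

theory Submission
  imports Defs "HOL-Computational_Algebra.Polynomial"
begin

unbundle fps_syntax

definition lowv :: "'a::field fls \<Rightarrow> int \<Rightarrow> bool" where
  "lowv u e \<longleftrightarrow> (\<forall>j<e. u $$ j = 0)"

lemma lowv_iff: "lowv u e \<longleftrightarrow> u = 0 \<or> e \<le> fls_subdegree u"
proof
  assume "lowv u e"
  show "u = 0 \<or> e \<le> fls_subdegree u"
  proof (rule ccontr)
    assume "\<not> (u = 0 \<or> e \<le> fls_subdegree u)"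
    hence "u \<noteq> 0" "fls_subdegree u < e" by auto
    with \<open>lowv u e\<close> have "u $$ fls_subdegree u = 0" unfolding lowv_def by auto
    with \<open>u \<noteq> 0\<close> show False using nth_fls_subdegree_nonzero by blast
  qed
next
  assume "u = 0 \<or> e \<le> fls_subdegree u"
  thus "lowv u e" unfolding lowv_def using fls_eq0_below_subdegree by fastforce
qed

lemma lowv_0[simp]: "lowv 0 e" by (simp add: lowv_def)
lemma lowv_add: "lowv u e \<Longrightarrow> lowv v e \<Longrightarrow> lowv (u + v) e" by (simp add: lowv_def)
lemma lowv_diff: "lowv u e \<Longrightarrow> lowv v e \<Longrightarrow> lowv (u - v) e" by (simp add: lowv_def)
lemma lowv_uminus: "lowv u e \<Longrightarrow> lowv (- u) e" by (simp add: lowv_def)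
lemma lowv_mono: "lowv u e \<Longrightarrow> e' \<le> e \<Longrightarrow> lowv u e'" by (simp add: lowv_def)
lemma lowv_sum: "(\<And>i. i \<in> S \<Longrightarrow> lowv (f i) e) \<Longrightarrow> lowv (\<Sum>i\<in>S. f i) e"
  by (induction S rule: infinite_finite_induct) (auto intro: lowv_add)
lemma lowv_mult: "lowv u e1 \<Longrightarrow> lowv v e2 \<Longrightarrow> lowv (u * v) (e1 + e2)"
  unfolding lowv_iff by (cases "u = 0 \<or> v = 0") (auto simp: fls_subdegree_mult)


subsection \<open>Congruence modulo q^M\<close>

definition eqm :: "nat \<Rightarrow> 'a::field fls fps \<Rightarrow> 'a fls fps \<Rightarrow> bool" where
  "eqm M F G \<longleftrightarrow> (\<forall>m<M. F $ m = G $ m)"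

lemma eqm_refl[simp]: "eqm M F F" by (simp add: eqm_def)
lemma eqm_sym: "eqm M F G \<Longrightarrow> eqm M G F" by (simp add: eqm_def)
lemma eqm_trans: "eqm M F G \<Longrightarrow> eqm M G H \<Longrightarrow> eqm M F H" by (simp add: eqm_def)
lemma eqm_mono: "eqm M F G \<Longrightarrow> M' \<le> M \<Longrightarrow> eqm M' F G" by (simp add: eqm_def)
lemma eqm_add: "eqm M F G \<Longrightarrow> eqm M F' G' \<Longrightarrow> eqm M (F + F') (G + G')" by (simp add: eqm_def)
lemma eqm_diff: "eqm M F G \<Longrightarrow> eqm M F' G' \<Longrightarrow> eqm M (F - F') (G - G')" by (simp add: eqm_def)
lemma eqm_0_iff: "eqm M (F - G) 0 \<longleftrightarrow> eqm M F G" by (simp add: eqm_def)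

lemma eqm_mult: "eqm M F G \<Longrightarrow> eqm M F' G' \<Longrightarrow> eqm M (F * F') (G * G')"
  unfolding eqm_def fps_mult_nth by (auto intro!: sum.cong)

lemma eqm_all: "(\<And>M. eqm M F G) \<Longrightarrow> F = G"
  unfolding eqm_def by (metis fps_ext lessI)

lemma eqm_inverse:
  assumes "eqm M F G" "F $ 0 \<noteq> 0"
  shows "eqm M (inverse F) (inverse G)"
proof (cases M)
  case 0 thus ?thesis by (simp add: eqm_def)
next
  case (Suc M')
  hence G0: "G $ 0 = F $ 0" using assms(1) by (simp add: eqm_def)
  have "eqm M (inverse F * G) (inverse F * F)"
    using eqm_mult[OF eqm_refl eqm_sym[OF assms(1)]] by blast
  hence "eqm M (inverse F * G * inverse G) (inverse F * F * inverse G)"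
    by (rule eqm_mult) simp
  moreover have "inverse F * G * inverse G = inverse F"
    using G0 assms(2) by (simp add: mult.assoc inverse_mult_eq_1')
  moreover have "inverse F * F * inverse G = inverse G"
    using assms(2) by (simp add: inverse_mult_eq_1)
  ultimately show ?thesis by simp
qed

lemma eqm_prod1: "(\<And>j. j \<in> S \<Longrightarrow> eqm M (f j) 1) \<Longrightarrow> eqm M (\<Prod>j\<in>S. f j) 1"
proof (induction S rule: infinite_finite_induct)
  case (insert x F)
  hence "eqm M (f x * (\<Prod>j\<in>F. f j)) (1 * 1)" by (intro eqm_mult) auto
  thus ?case using insert by simp
qed auto

lemma eqm_Xpow: "eqm k (fps_X ^ k * F) 0"
  by (simp add: eqm_def fps_X_power_mult_nth)

lemma eqm_Xpow': "k \<le> k' \<Longrightarrow> eqm k (F * fps_X ^ k') 0"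
  by (metis eqm_Xpow eqm_mono mult.commute)

subsection \<open>Lower bounds of w-orders\<close>

definition wbl :: "'a::field fls fps \<Rightarrow> int \<Rightarrow> int \<Rightarrow> bool" where
  "wbl F c s \<longleftrightarrow> (\<forall>m. lowv (F $ m) (c - s * int m))"

lemma wbl_0[simp]: "wbl 0 c s" by (simp add: wbl_def)

lemma wbl_const: "lowv a c \<Longrightarrow> wbl (fps_const a) c s"
  by (auto simp: wbl_def)

lemma wbl_1: "c \<le> 0 \<Longrightarrow> wbl 1 c s"
  using wbl_const[of 1 c s] by (simp add: lowv_iff)

lemma wbl_add: "wbl F c s \<Longrightarrow> wbl G c s \<Longrightarrow> wbl (F + G) c s"
  by (simp add: wbl_def lowv_add)
lemma wbl_diff: "wbl F c s \<Longrightarrow> wbl G c s \<Longrightarrow> wbl (F - G) c s"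
  by (simp add: wbl_def lowv_diff)
lemma wbl_uminus: "wbl F c s \<Longrightarrow> wbl (- F) c s"
  by (simp add: wbl_def lowv_uminus)
lemma wbl_mono: "wbl F c s \<Longrightarrow> c' \<le> c \<Longrightarrow> s \<le> s' \<Longrightarrow> wbl F c' s'"
  unfolding wbl_def
  by (meson lowv_mono diff_mono mult_right_mono of_nat_0_le_iff)

lemma wbl_mult: "wbl F c1 s \<Longrightarrow> wbl G c2 s \<Longrightarrow> wbl (F * G) (c1 + c2) s"
  unfolding wbl_def fps_mult_nth
proof (intro allI lowv_sum)
  fix m :: nat and i :: nat assume F: "\<forall>m. lowv (F $ m) (c1 - s * int m)" and G: "\<forall>m. lowv (G $ m) (c2 - s * int m)"
    and i: "i \<in> {0..m}"
  have "lowv (F $ i * G $ (m - i)) ((c1 - s * int i) + (c2 - s * int (m - i)))"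
    using F G by (intro lowv_mult) auto
  moreover have "(c1 - s * int i) + (c2 - s * int (m - i)) = c1 + c2 - s * int m"
    using i by (simp add: of_nat_diff algebra_simps)
  ultimately show "lowv (F $ i * G $ (m - i)) (c1 + c2 - s * int m)" by simp
qed

lemma wbl_sum: "(\<And>i. i \<in> S \<Longrightarrow> wbl (f i) c s) \<Longrightarrow> wbl (\<Sum>i\<in>S. f i) c s"
  unfolding wbl_def by (auto simp: fps_sum_nth intro!: lowv_sum)

lemma wbl_prod: "(\<And>i. i \<in> S \<Longrightarrow> wbl (f i) 0 s) \<Longrightarrow> wbl (\<Prod>i\<in>S. f i) 0 s"
proof (induction S rule: infinite_finite_induct)
  case (insert x F)
  thus ?case using wbl_mult[of "f x" 0 s "\<Prod>i\<in>F. f i" 0] by simp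
qed (auto intro: wbl_1)

lemma wbl_monom: "lowv a (- s * int k) \<Longrightarrow> wbl (fps_const a * fps_X ^ k) 0 s"
  by (auto simp: wbl_def fps_X_power_mult_right_nth)

lemma wbl_limit: "(\<And>N. eqm N (P N) G) \<Longrightarrow> (\<And>N. wbl (P N) c s) \<Longrightarrow> wbl G c s"
  unfolding wbl_def eqm_def by (metis lessI)

lemma wbl_inverse:
  assumes F0: "F $ 0 = 1" and F: "wbl F 0 s" and s: "s \<ge> 0"
  shows "wbl (inverse F) 0 s"
  unfolding wbl_def
proof
  fix m
  show "lowv (inverse F $ m) (0 - s * int m)"
  proof (induction m rule: less_induct)
    case (less m)
    show ?case
    proof (cases m)
      case 0 thus ?thesis using F0 by (simp add: lowv_iff)
    next
      case (Suc m')
      have "inverse F $ m = - (\<Sum>i\<in>{1..m}. F $ i * inverse F $ (m - i))"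
        using F0 Suc by (simp add: fps_inverse_def)
      also have "lowv \<dots> (0 - s * int m)"
      proof (intro lowv_uminus lowv_sum)
        fix i assume i: "i \<in> {1..m}"
        have "lowv (F $ i * inverse F $ (m - i)) ((0 - s * int i) + (0 - s * int (m - i)))"
          using F i less[of "m - i"] unfolding wbl_def by (intro lowv_mult) auto
        moreover have "(0 - s * int i) + (0 - s * int (m - i)) = 0 - s * int m"
          using i by (simp add: of_nat_diff algebra_simps)
        ultimately show "lowv (F $ i * inverse F $ (m - i)) (0 - s * int m)" by simp
      qed
      finally show ?thesis .
    qed
  qed
qed

subsection \<open>Smallness up to q-degree n\<close>

definition small :: "nat \<Rightarrow> int \<Rightarrow> 'a::field fls fps \<Rightarrow> bool" where
  "small n d F \<longleftrightarrow> (\<forall>m\<le>n. lowv (F $ m) d)"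

lemma small_0[simp]: "small n d 0" by (simp add: small_def)
lemma small_add: "small n d F \<Longrightarrow> small n d G \<Longrightarrow> small n d (F + G)"
  by (simp add: small_def lowv_add)
lemma small_diff: "small n d F \<Longrightarrow> small n d G \<Longrightarrow> small n d (F - G)"
  by (simp add: small_def lowv_diff)
lemma small_sum: "(\<And>i. i \<in> S \<Longrightarrow> small n d (f i)) \<Longrightarrow> small n d (\<Sum>i\<in>S. f i)"
  unfolding small_def by (auto simp: fps_sum_nth intro!: lowv_sum)
lemma small_eqm: "eqm M F 0 \<Longrightarrow> n < M \<Longrightarrow> small n d F"
  by (auto simp: small_def eqm_def)
lemma small_wbl: "wbl F c s \<Longrightarrow> d \<le> c - s * int n \<Longrightarrow> s \<ge> 0 \<Longrightarrow> small n d F"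
  unfolding small_def wbl_def
  by (meson lowv_mono order_trans diff_left_mono mult_left_mono of_nat_le_iff)
lemma small_const: "lowv a d \<Longrightarrow> small n d (fps_const a)"
  by (auto simp: small_def)

lemma small_mult:
  assumes "small n d F" "wbl G c s" "s \<ge> 0"
  shows "small n (d + c - s * int n) (F * G)"
  unfolding small_def fps_mult_nth
proof (intro allI impI lowv_sum)
  fix m i assume m: "m \<le> n" and i: "i \<in> {0..m}"
  have "lowv (F $ i * G $ (m - i)) (d + (c - s * int (m - i)))"
    using assms m i unfolding small_def wbl_def by (intro lowv_mult) (auto simp del: of_nat_diff)
  moreover have "d + c - s * int n \<le> d + (c - s * int (m - i))"
    using m i assms(3) by (simp add: mult_left_mono)
  ultimately show "lowv (F $ i * G $ (m - i)) (d + c - s * int n)"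
    by (simp add: lowv_mono)
qed

lemma small_mult':
  "small n d F \<Longrightarrow> wbl G c s \<Longrightarrow> s \<ge> 0 \<Longrightarrow> small n (d + c - s * int n) (G * F)"
  using small_mult by (metis mult.commute)

lemma small_mono: "small n d F \<Longrightarrow> d' \<le> d \<Longrightarrow> small n d' F"
  by (auto simp: small_def intro: lowv_mono)


subsection \<open>Limits\<close>

lemma dist_fls_lowv:
  fixes a b :: "'a::field fls"
  assumes "lowv (a - b) (int d)"
  shows "dist a b \<le> inverse (2 ^ d)"
proof (cases "a = b")
  case True thus ?thesis by simp
next
  case False
  hence "a - b \<noteq> 0" by simp
  with assms have sd: "int d \<le> fls_subdegree (a - b)" by (simp add: lowv_iff)
  hence "dist a b = inverse (2 ^ nat (fls_subdegree (a - b)))"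
    using False by (simp add: dist_fls_def)
  also have "\<dots> \<le> inverse (2 ^ d)"
    using sd by (intro le_imp_inverse_le power_increasing) auto
  finally show ?thesis .
qed

lemma qz_tendsto_crit:
  fixes S :: "nat \<Rightarrow> 'a::field fls fps"
  assumes "\<And>n d. \<exists>N0. \<forall>N\<ge>N0. small n d (S N - L)"
  shows "qz_tendsto S L"
  unfolding qz_tendsto_def
proof (intro allI metric_LIMSEQ_I)
  fix n :: nat and r :: real assume r: "r > 0"
  obtain d :: nat where d: "(1/2::real) ^ d < r" using real_arch_pow_inv[OF r, of "1/2"] by auto
  obtain N0 where N0: "\<forall>N\<ge>N0. small n (int d) (S N - L)" using assms by blast
  show "\<exists>no. \<forall>N\<ge>no. dist (S N $ n) (L $ n) < r"
  proof (intro exI allI impI)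
    fix N assume "N \<ge> N0"
    hence "lowv (S N $ n - L $ n) (int d)" using N0 by (auto simp: small_def)
    hence "dist (S N $ n) (L $ n) \<le> inverse (2 ^ d)" by (rule dist_fls_lowv)
    also have "\<dots> < r" using d by (simp add: power_divide field_simps)
    finally show "dist (S N $ n) (L $ n) < r" .
  qed
qed

lemma qz_tendsto_unique:
  assumes "qz_tendsto S L1" "qz_tendsto S L2"
  shows "L1 = L2"
proof (rule fps_ext)
  fix n
  show "L1 $ n = L2 $ n"
    using assms unfolding qz_tendsto_def by (intro LIMSEQ_unique[of "\<lambda>m. S m $ n"]) auto
qed

lemma qz_lim_eq: "qz_tendsto S L \<Longrightarrow> qz_lim S = L"
  unfolding qz_lim_def using qz_tendsto_unique by blast

lemma qz_tendsto_eqm: "(\<And>N. eqm N (S N) L) \<Longrightarrow> qz_tendsto S L"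
proof (rule qz_tendsto_crit)
  fix n d assume e: "\<And>N. eqm N (S N) L"
  show "\<exists>N0. \<forall>N\<ge>N0. small n d (S N - L)"
  proof (intro exI allI impI)
    fix N assume "N \<ge> Suc n"
    hence "eqm (Suc n) (S N - L) 0" using e eqm_mono eqm_0_iff by blast
    thus "small n d (S N - L)" by (rule small_eqm) simp
  qed
qed

lemma stable_limit:
  assumes "\<And>N N'. N \<le> N' \<Longrightarrow> eqm N (S N) (S N')"
  shows "eqm N (S N) (Abs_fps (\<lambda>n. S (Suc n) $ n))"
  unfolding eqm_def
proof (intro allI impI)
  fix m assume "m < N"
  hence "eqm (Suc m) (S (Suc m)) (S N)" using assms by auto
  thus "S N $ m = Abs_fps (\<lambda>n. S (Suc n) $ n) $ m" by (simp add: eqm_def)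
qed

lemma prod_stable:
  assumes "\<And>j. eqm j (f j) 1"
  shows "N \<le> N' \<Longrightarrow> eqm N (\<Prod>j<N. f j) (\<Prod>j<N'. f j)"
proof -
  assume NN: "N \<le> N'"
  have "{..<N'} = {..<N} \<union> {N..<N'}" using NN by auto
  hence "(\<Prod>j<N'. f j) = (\<Prod>j<N. f j) * (\<Prod>j\<in>{N..<N'}. f j)"
    using prod.atLeastLessThan_concat[of 0 N N' f] NN by (simp add: atLeast0LessThan)
  moreover have "eqm N (\<Prod>j\<in>{N..<N'}. f j) 1"
    by (rule eqm_prod1) (auto intro: eqm_mono[OF assms])
  ultimately show ?thesis
    using eqm_mult[OF eqm_refl[of N "\<Prod>j<N. f j"] eqm_sym[of N "\<Prod>j\<in>{N..<N'}. f j" 1]] by simp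
qed

lemma prodinf_eqm:
  assumes "\<And>j. eqm j (f j) 1"
  shows "eqm N (\<Prod>j<N. f j) (qz_prodinf f)"
proof -
  let ?L = "Abs_fps (\<lambda>n. (\<Prod>j<Suc n. f j) $ n)"
  have e: "eqm N (\<Prod>j<N. f j) ?L" for N
    using stable_limit[of "\<lambda>N. \<Prod>j<N. f j"] prod_stable[OF assms] by blast
  hence "qz_prodinf f = ?L" unfolding qz_prodinf_def
    by (intro qz_lim_eq qz_tendsto_eqm) auto
  thus ?thesis using e by simp
qed


lemma lin_prod_poly:
  fixes c :: "'b \<Rightarrow> 'k::field"
  assumes "finite S"
  shows "degree (\<Prod>i\<in>S. [:1, c i:]) \<le> card S \<and> coeff (\<Prod>i\<in>S. [:1, c i:]) (card S) = (\<Prod>i\<in>S. c i)"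
  using assms
proof (induction S rule: finite_induct)
  case empty thus ?case by simp
next
  case (insert a S)
  let ?P = "\<Prod>i\<in>S. [:1, c i:]"
  have eq: "(\<Prod>i\<in>insert a S. [:1, c i:]) = ?P + pCons 0 (smult (c a) ?P)"
    using insert by (simp add: mult_pCons_left)
  have "degree (?P + pCons 0 (smult (c a) ?P)) \<le> Suc (card S)"
    using insert.IH
    by (intro degree_add_le) (auto simp: degree_pCons_le le_SucI intro: order_trans[OF degree_pCons_le] order_trans[OF degree_smult_le])
  moreover have "coeff ?P (Suc (card S)) = 0"
    using insert.IH by (intro coeff_eq_0) auto
  ultimately show ?case using insert eq by simp
qed

lemma partial_fractions:
  fixes \<alpha> :: "nat \<Rightarrow> 'k::field" and x b :: 'k
  assumes inj: "inj_on \<alpha> {..<M}" and nz: "\<And>i. i < M \<Longrightarrow> \<alpha> i \<noteq> 0"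
    and den: "\<And>i. i < M \<Longrightarrow> 1 - b * \<alpha> i \<noteq> 0"
  shows "(\<Prod>i<M. (1 - x * b * \<alpha> i) / (1 - b * \<alpha> i)) =
         x ^ M + (\<Sum>i<M. ((\<Prod>l<M. (1 - x * \<alpha> l / \<alpha> i)) / (\<Prod>l\<in>{..<M}-{i}. (1 - \<alpha> l / \<alpha> i)))
                         / (1 - b * \<alpha> i))"
proof -
  define \<rho> where "\<rho> i = (\<Prod>l<M. (1 - x * \<alpha> l / \<alpha> i)) / (\<Prod>l\<in>{..<M}-{i}. (1 - \<alpha> l / \<alpha> i))" for i
  define Pn where "Pn = (\<Prod>i<M. [:1, - x * \<alpha> i:])"
  define Qd where "Qd = (\<Prod>i<M. [:1, - \<alpha> i:])"
  define Qk where "Qk i = (\<Prod>l\<in>{..<M}-{i}. [:1, - \<alpha> l:])" for i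
  define Rp where "Rp = smult (x ^ M) Qd + (\<Sum>i<M. smult (\<rho> i) (Qk i))"
  have Pn: "degree Pn \<le> M" "coeff Pn M = (\<Prod>i<M. - x * \<alpha> i)"
    using lin_prod_poly[of "{..<M}" "\<lambda>i. - x * \<alpha> i"] by (simp_all add: Pn_def)
  have Qd: "degree Qd \<le> M" "coeff Qd M = (\<Prod>i<M. - \<alpha> i)"
    using lin_prod_poly[of "{..<M}" "\<lambda>i. - \<alpha> i"] by (simp_all add: Qd_def)
  have Qk: "degree (Qk i) < M" if "i < M" for i
  proof -
    have "degree (Qk i) \<le> M - 1"
      using lin_prod_poly[of "{..<M}-{i}" "\<lambda>i. - \<alpha> i"] that by (simp add: Qk_def)
    thus ?thesis using that by linarith
  qed
  have Rdeg: "degree Rp \<le> M"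
    unfolding Rp_def
    by (intro degree_add_le order_trans[OF degree_smult_le] Qd degree_sum_le)
       (auto intro: order_trans[OF degree_smult_le] less_imp_le Qk)
  have Rcoeff: "coeff Rp M = (\<Prod>i<M. - x * \<alpha> i)"
  proof -
    have "coeff Rp M = x ^ M * (\<Prod>i<M. - \<alpha> i) + (\<Sum>i<M. \<rho> i * coeff (Qk i) M)"
      by (simp add: Rp_def coeff_sum Qd)
    also have "(\<Sum>i<M. \<rho> i * coeff (Qk i) M) = 0"
      using Qk by (intro sum.neutral) (auto simp: coeff_eq_0)
    also have "x ^ M * (\<Prod>i<M. - \<alpha> i) = (\<Prod>i<M. - x * \<alpha> i)"
    proof -
      have "(\<Prod>i<M. - x * \<alpha> i) = (\<Prod>i<M. x * (- \<alpha> i))" by (intro prod.cong) auto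
      also have "\<dots> = (\<Prod>i<M. x) * (\<Prod>i<M. - \<alpha> i)" by (rule prod.distrib)
      also have "\<dots> = x ^ M * (\<Prod>i<M. - \<alpha> i)" by simp
      finally show ?thesis by simp
    qed
    finally show ?thesis by simp
  qed
  have eval: "poly Pn z = poly Rp z" if z: "z \<in> (\<lambda>i. inverse (\<alpha> i)) ` {..<M}" for z
  proof -
    obtain i where i: "i < M" "z = inverse (\<alpha> i)" using z by auto
    have ai: "\<alpha> i \<noteq> 0" using nz i by auto
    have "poly Qd z = 0"
      unfolding Qd_def poly_prod using i ai by (intro prod_zero) (auto intro!: bexI[of _ i])
    moreover have "poly (Qk j) z = 0" if "j < M" "j \<noteq> i" for j
      unfolding Qk_def poly_prod using i ai that by (intro prod_zero) (auto intro!: bexI[of _ i])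
    hence "(\<Sum>j<M. \<rho> j * poly (Qk j) z) = \<rho> i * poly (Qk i) z"
      using i by (subst sum.remove[of _ i]) (auto intro!: sum.neutral)
    moreover have "poly (Qk i) z = (\<Prod>l\<in>{..<M}-{i}. (1 - \<alpha> l / \<alpha> i))"
      unfolding Qk_def poly_prod using i by (intro prod.cong) (auto simp: field_simps)
    moreover have "(\<Prod>l\<in>{..<M}-{i}. (1 - \<alpha> l / \<alpha> i)) \<noteq> 0"
    proof -
      have "1 - \<alpha> l / \<alpha> i \<noteq> 0" if "l < M" "l \<noteq> i" for l
        using inj that i ai by (auto simp: inj_on_def field_simps)
      thus ?thesis by (auto simp: prod_zero_iff)
    qed
    moreover have "poly Pn z = (\<Prod>l<M. (1 - x * \<alpha> l / \<alpha> i))"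
      unfolding Pn_def poly_prod using i by (intro prod.cong) (auto simp: field_simps)
    ultimately show ?thesis
      by (simp add: Rp_def poly_sum \<rho>_def)
  qed
  have card: "card ((\<lambda>i. inverse (\<alpha> i)) ` {..<M}) = M"
  proof -
    have "inj_on (\<lambda>i. inverse (\<alpha> i)) {..<M}"
      using inj by (auto simp: inj_on_def)
    thus ?thesis by (simp add: card_image)
  qed
  have PR: "Pn = Rp"
    by (rule poly_eqI_degree_lead_coeff[of Pn M Rp "(\<lambda>i. inverse (\<alpha> i)) ` {..<M}"])
       (use Pn Rdeg Rcoeff card eval in auto)
  have Qdb: "poly Qd b = (\<Prod>i<M. (1 - b * \<alpha> i))"
    unfolding Qd_def poly_prod by (intro prod.cong) (auto simp: algebra_simps)
  have Qdb0: "poly Qd b \<noteq> 0" using den by (auto simp: Qdb prod_zero_iff)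
  have Qkb: "poly Qd b = (1 - b * \<alpha> i) * poly (Qk i) b" if "i < M" for i
  proof -
    have "poly Qd b = (\<Prod>l<M. (1 - b * \<alpha> l))" by (rule Qdb)
    also have "\<dots> = (1 - b * \<alpha> i) * (\<Prod>l\<in>{..<M}-{i}. (1 - b * \<alpha> l))"
      using that by (subst prod.remove[of _ i]) auto
    also have "(\<Prod>l\<in>{..<M}-{i}. (1 - b * \<alpha> l)) = poly (Qk i) b"
      unfolding Qk_def poly_prod by (intro prod.cong) (auto simp: algebra_simps)
    finally show ?thesis .
  qed
  have "(\<Prod>i<M. (1 - x * b * \<alpha> i) / (1 - b * \<alpha> i)) = poly Pn b / poly Qd b"
    unfolding prod_dividef Qdb unfolding Pn_def poly_prod
    by (intro arg_cong2[where f="(/)"] prod.cong) (auto simp: algebra_simps)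
  also have "\<dots> = poly Rp b / poly Qd b" using PR by simp
  also have "\<dots> = x ^ M + (\<Sum>i<M. \<rho> i * poly (Qk i) b / poly Qd b)"
    using Qdb0 by (simp add: Rp_def poly_sum add_divide_distrib sum_divide_distrib)
  also have "(\<Sum>i<M. \<rho> i * poly (Qk i) b / poly Qd b) = (\<Sum>i<M. \<rho> i / (1 - b * \<alpha> i))"
  proof (intro sum.cong refl)
    fix i assume "i \<in> {..<M}"
    hence i: "i < M" by simp
    have "poly (Qk i) b \<noteq> 0" using Qdb0 Qkb[OF i] by auto
    thus "\<rho> i * poly (Qk i) b / poly Qd b = \<rho> i / (1 - b * \<alpha> i)"
      unfolding Qkb[OF i] using den[OF i] by simp
  qed
  finally show ?thesis unfolding \<rho>_def .
qed


unbundle fps_syntax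

definition pw :: "nat \<Rightarrow> 'a::field fls fps" where "pw a = (\<Prod>m<a. 1 - zpow (-1) * fps_X ^ m)"
definition pz :: "nat \<Rightarrow> 'a::field fls fps" where "pz b = (\<Prod>m<b. 1 - zpow 1 * fps_X ^ (m + 1))"
definition pd :: "nat \<Rightarrow> 'a::field fls fps" where "pd c = (\<Prod>m<c. 1 - fps_X ^ (m + 1))"
definition gg :: "nat \<Rightarrow> nat \<Rightarrow> nat \<Rightarrow> nat \<Rightarrow> 'a::field fls fps" where
  "gg a b c d = pw a * pz b * inverse (pd c * pd d)"
definition pa :: "nat \<Rightarrow> 'a::field fls fps" where "pa N = (\<Prod>j<N. 1 + zpow 1 * fps_X ^ j)"
definition pa' :: "nat \<Rightarrow> 'a::field fls fps" where "pa' N = (\<Prod>j<N. 1 + zpow (-1) * fps_X ^ (j + 1))"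
definition pc0 :: "nat \<Rightarrow> 'a::field fls fps" where "pc0 N = (\<Prod>j<N. 1 + zpow 2 * fps_X ^ j)"
definition pc' :: "nat \<Rightarrow> 'a::field fls fps" where "pc' N = (\<Prod>j<N. 1 + zpow (-2) * fps_X ^ (j + 1))"
definition FN :: "nat \<Rightarrow> 'a::field fls fps" where "FN N = pa N * pa' N * inverse (pc0 N * pc' N)"
definition ta :: "nat \<Rightarrow> 'a::field fls fps" where "ta r = inverse (1 + zpow 2 * fps_X ^ r)"
definition tb :: "nat \<Rightarrow> 'a::field fls fps" where
  "tb r = zpow (-2) * fps_X ^ (r + 1) * inverse (1 + zpow (-2) * fps_X ^ (r + 1))"
definition RN :: "nat \<Rightarrow> 'a::field fls fps" where
  "RN N = fps_const (fls_X ^ N)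
     + (\<Sum>k<N. zpow (- int k) * gg (N - k) (N + k) (N + k) (N - 1 - k) * ta k)
     + (\<Sum>m<N. zpow (int m + 1) * gg (N + 1 + m) (N - 1 - m) (N - 1 - m) (N + m) * tb m)"

lemma XinvX: "(fls_X_inv :: 'a::field fls) * fls_X = 1"
  by (metis fls_inverse_X fls_X_nonzero left_inverse)

lemma zpow_nat: "zpow (int k) = (fps_const (fls_X_inv ^ k) :: 'a::field fls fps)"
  by (simp add: zpow_def)

lemma zpow_neg_nat: "zpow (- int k) = (fps_const (fls_X ^ k) :: 'a::field fls fps)"
  by (simp add: zpow_def power_int_minus power_inverse flip: fls_inverse_X)

lemma zpow_add: "zpow (a + b) = (zpow a * zpow b :: 'a::field fls fps)"
  by (simp add: zpow_def power_int_add fps_const_mult)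

lemma io_prod: "fps_to_fls (\<Prod>i\<in>S. f i) = (\<Prod>i\<in>S. fps_to_fls (f i))"
  by (induction S rule: infinite_finite_induct) (auto simp: fls_times_fps_to_fls)

lemma io_sum: "fps_to_fls (\<Sum>i\<in>S. f i) = (\<Sum>i\<in>S. fps_to_fls (f i))"
  by (induction S rule: infinite_finite_induct) auto

lemma io_inverse: "(F :: 'a::field fps) $ 0 \<noteq> 0 \<Longrightarrow> fps_to_fls (inverse F) = inverse (fps_to_fls F)"
  by (simp add: fls_inverse_fps_to_fls subdegree_eq_0)

lemma io_mult: "fps_to_fls ((F :: 'a::field fps) * G) = fps_to_fls F * fps_to_fls G"
  by (rule fls_times_fps_to_fls)

lemma io_zpow: "fps_to_fls (zpow k :: 'a::field fls fps) = fls_const (fls_X_inv powi k)"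
  by (simp add: zpow_def)

lemma io_Xpow: "fps_to_fls (fps_X ^ k :: 'a::field fps) = fls_X ^ k"
  by (simp add: fps_to_fls_power)

lemma fls_X_power_inj: "(fls_X :: 'a::field fls) ^ i = fls_X ^ j \<Longrightarrow> i = j"
  by (metis fls_subdegree_fls_X_pow of_nat_eq_iff)

lemma one_plus_Zsq_nz: "1 + (fls_X_inv :: 'a::field fls) ^ 2 \<noteq> 0"
proof
  assume "1 + (fls_X_inv :: 'a fls) ^ 2 = 0"
  hence "(1 + (fls_X_inv :: 'a fls) ^ 2) $$ (-2) = 0" by simp
  thus False by (simp add: fls_X_inv_power_conv_shift_1)
qed

lemma one_plus_Z_nz: "1 + (fls_X_inv :: 'a::field fls) \<noteq> 0"
proof
  assume "1 + (fls_X_inv :: 'a fls) = 0"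
  hence "(1 + (fls_X_inv :: 'a fls)) $$ (-1) = 0" by simp
  thus False by simp
qed

lemma one_minus_W_nz: "1 - (fls_X :: 'a::field fls) \<noteq> 0"
proof
  assume "1 - (fls_X :: 'a fls) = 0"
  hence "(1 - (fls_X :: 'a fls)) $$ 1 = 0" by simp
  thus False by simp
qed


lemma io_zpow1: "fps_to_fls (zpow 1 :: 'a::field fls fps) = fls_const fls_X_inv"
  by (simp add: io_zpow)
lemma io_zpowm1: "fps_to_fls (zpow (-1) :: 'a::field fls fps) = fls_const fls_X"
  by (simp add: io_zpow power_int_minus fls_inverse_X[symmetric])
lemma io_zpow2: "fps_to_fls (zpow 2 :: 'a::field fls fps) = fls_const fls_X_inv ^ 2"
  by (simp add: io_zpow fls_const_power)
lemma io_zpowm2: "fps_to_fls (zpow (-2) :: 'a::field fls fps) = fls_const fls_X ^ 2"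
proof -
  have "(fls_X_inv :: 'a fls) powi (-2) = fls_X ^ 2"
    by (simp add: power_int_minus power_inverse fls_inverse_X[symmetric])
  thus ?thesis by (simp add: io_zpow fls_const_power)
qed
lemma io_zpow_neg_nat: "fps_to_fls (zpow (- int k) :: 'a::field fls fps) = fls_const fls_X ^ k"
  by (simp add: zpow_neg_nat fls_const_power)
lemma io_zpow_nat: "fps_to_fls (zpow (int k) :: 'a::field fls fps) = fls_const fls_X_inv ^ k"
  by (simp add: zpow_nat fls_const_power)

lemma XXinv: "(fls_X :: 'a::field fls) * fls_X_inv = 1"
  by (metis XinvX mult.commute)

lemma cWZ: "fls_const (fls_X :: 'a::field fls) * fls_const fls_X_inv = 1"
  by (simp add: XXinv)

lemma prod_split: "(\<Prod>i<a+(b::nat). (f i :: 'b::comm_monoid_mult)) = (\<Prod>i<a. f i) * (\<Prod>k<b. f (a+k))"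
  by (induction b) (auto simp: mult.assoc)

lemma sum_split: "(\<Sum>i<a+(b::nat). (f i :: 'b::comm_monoid_add)) = (\<Sum>i<a. f i) + (\<Sum>k<b. f (a+k))"
  by (induction b) (auto simp: add.assoc)

lemma prod_remove_split:
  fixes i M :: nat
  assumes "i < M"
  shows "(\<Prod>l\<in>{..<M}-{i}. f l) = (\<Prod>l<i. f l) * (\<Prod>m<M-1-i. f (i+1+m))"
proof -
  define g where "g = f(i := 1)"
  have "(\<Prod>l\<in>{..<M}-{i}. f l) = (\<Prod>l\<in>{..<M}-{i}. g l)"
    by (intro prod.cong) (auto simp: g_def)
  also have "\<dots> = (\<Prod>l<M. g l)"
    using assms prod.remove[OF finite_lessThan, of i M g] by (simp add: g_def)
  also have "(\<Prod>l<M. g l) = (\<Prod>l<i + Suc (M-1-i). g l)"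
  proof -
    have "i + Suc (M-1-i) = M" using assms by simp
    thus ?thesis by simp
  qed
  also have "(\<Prod>l<i + Suc (M-1-i). g l) = (\<Prod>l<i. g l) * (\<Prod>k<Suc (M-1-i). g (i+k))"
    by (rule prod_split)
  also have "(\<Prod>k<Suc (M-1-i). g (i+k)) = g i * (\<Prod>k<M-1-i. g (i + Suc k))"
    by (subst prod.lessThan_Suc_shift) simp
  also have "(\<Prod>l<i. g l) = (\<Prod>l<i. f l)" by (intro prod.cong) (auto simp: g_def)
  also have "(\<Prod>k<M-1-i. g (i + Suc k)) = (\<Prod>m<M-1-i. f (i+1+m))"
    by (intro prod.cong) (auto simp: g_def)
  finally show ?thesis by (simp add: g_def)
qed

lemma field_aux1:
  fixes cW cZ P :: "'k::field"
  assumes "cW * cZ = 1" "P \<noteq> 0" "1 + cW^2 * P \<noteq> 0"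
  shows "1 - (- (cZ^2 * inverse P)) \<noteq> 0"
    and "(1 - cW * (- (cZ^2 * inverse P))) / (1 - (- (cZ^2 * inverse P))) = cW * (1 + cW * P) / (1 + cW^2 * P)"
    and "1 / (1 - (- (cZ^2 * inverse P))) = cW^2 * P / (1 + cW^2 * P)"
proof -
  have W: "cW \<noteq> 0" using assms(1) by auto
  have Z: "cZ = inverse cW" by (rule inverse_unique[symmetric]) (rule assms(1))
  have e: "1 - (- (cZ^2 * inverse P)) = (1 + cW^2 * P) / (cW^2 * P)"
    using W assms(2) by (simp add: Z field_simps power2_eq_square)
  show "1 - (- (cZ^2 * inverse P)) \<noteq> 0" using e W assms by simp
  have a: "1 - cW * (- (cZ^2 * inverse P)) = (1 + cW * P) / (cW * P)"
    using W assms(2) by (simp add: Z field_simps power2_eq_square)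
  have "((1 + cW * P) / (cW * P)) / ((1 + cW^2 * P) / (cW^2 * P)) = ((1 + cW * P) * (cW^2 * P)) / ((cW * P) * (1 + cW^2 * P))"
    by (rule divide_divide_times_eq)
  also have "(1 + cW * P) * (cW^2 * P) = (cW * (1 + cW * P)) * (cW * P)"
    by (simp add: power2_eq_square algebra_simps)
  also have "(cW * (1 + cW * P)) * (cW * P) / ((cW * P) * (1 + cW^2 * P)) = (cW * (1 + cW * P)) / (1 + cW^2 * P)"
    by (subst mult.commute[of "cW * P"]) (rule nonzero_mult_divide_mult_cancel_right, simp add: W assms(2))
  finally show "(1 - cW * (- (cZ^2 * inverse P))) / (1 - (- (cZ^2 * inverse P))) = cW * (1 + cW * P) / (1 + cW^2 * P)"
    unfolding e a by simp
  show "1 / (1 - (- (cZ^2 * inverse P))) = cW^2 * P / (1 + cW^2 * P)"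
    unfolding e by simp
qed

lemma field_aux2:
  fixes cW cZ P :: "'k::field"
  assumes "cW * cZ = 1" "P \<noteq> 0" "1 - P \<noteq> 0"
  shows "(1 - cW * inverse P) / (1 - inverse P) = cW * (1 - cZ * P) / (1 - P)"
proof -
  have W: "cW \<noteq> 0" using assms(1) by auto
  have Z: "cZ = inverse cW" by (rule inverse_unique[symmetric]) (rule assms(1))
  have "1 - inverse P \<noteq> 0" using assms(2,3) by (auto simp: field_simps)
  thus ?thesis using W assms(2,3) by (simp add: Z field_simps)
qed


lemma prod_nth0: "(\<Prod>i\<in>S. f i) $ 0 = (\<Prod>i\<in>S. (f i :: 'a::field fls fps) $ 0)"
  by (induction S rule: infinite_finite_induct) auto

lemma pd_nth0: "pd c $ 0 = 1"
  by (simp add: pd_def prod_nth0)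

lemma io_pw: "fps_to_fls (pw a :: 'a::field fls fps) = (\<Prod>m<a. 1 - fls_const fls_X * fls_X ^ m)"
  by (simp add: pw_def io_prod io_mult io_zpowm1 io_Xpow)
lemma io_pz: "fps_to_fls (pz a :: 'a::field fls fps) = (\<Prod>m<a. 1 - fls_const fls_X_inv * fls_X ^ (m+1))"
  by (simp add: pz_def io_prod io_mult io_zpow1 io_Xpow)
lemma io_pd: "fps_to_fls (pd a :: 'a::field fls fps) = (\<Prod>m<a. 1 - fls_X ^ (m+1))"
  by (simp add: pd_def io_prod io_Xpow io_mult)
lemma io_gg: "fps_to_fls (gg a b c d :: 'a::field fls fps) =
   fps_to_fls (pw a) * fps_to_fls (pz b) / (fps_to_fls (pd c) * fps_to_fls (pd d))"
proof -
  have "(pd c * pd d :: 'a fls fps) $ 0 \<noteq> 0" by (simp add: pd_nth0)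
  thus ?thesis by (simp add: gg_def io_mult io_inverse divide_inverse)
qed

lemma div_pow_add: "(x::'k::field) \<noteq> 0 \<Longrightarrow> x^(i+m) / x^i = x^m"
  by (simp add: power_add)

lemma rho_closed:
  fixes i M :: nat
  assumes iM: "i < M"
  shows "(\<Prod>l<M. (1 - fls_const fls_X * (fls_X::'a::field fls fls)^l / fls_X^i)) /
           (\<Prod>l\<in>{..<M}-{i}. (1 - (fls_X::'a fls fls)^l / fls_X^i))
         = fls_const fls_X ^ i * fps_to_fls (gg (M-i) i i (M-1-i) :: 'a fls fps)"
proof -
  define Q :: "'a fls fls" where "Q = fls_X"
  define cW :: "'a fls fls" where "cW = fls_const fls_X"
  define cZ :: "'a fls fls" where "cZ = fls_const fls_X_inv"
  have WZ: "cW * cZ = 1" using cWZ by (simp add: cW_def cZ_def)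
  have Q0: "Q \<noteq> 0" by (simp add: Q_def)
  define f where "f l = 1 - cW * Q^l / Q^i" for l
  define g where "g l = 1 - Q^l / Q^i" for l
  have num: "(\<Prod>l<M. f l) = (\<Prod>l<i. f l) * fps_to_fls (pw (M-i) :: 'a fls fps)"
  proof -
    have "(\<Prod>l<M. f l) = (\<Prod>l<i + (M-i). f l)" using iM by simp
    also have "\<dots> = (\<Prod>l<i. f l) * (\<Prod>m<M-i. f (i+m))" by (rule prod_split)
    also have "(\<Prod>m<M-i. f (i+m)) = fps_to_fls (pw (M-i) :: 'a fls fps)"
    proof -
      have "f (i+m) = 1 - cW * Q^m" for m
        unfolding f_def times_divide_eq_right[symmetric] div_pow_add[OF Q0] ..
      thus ?thesis unfolding io_pw by (simp add: cW_def Q_def)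
    qed
    finally show ?thesis .
  qed
  have den: "(\<Prod>l\<in>{..<M}-{i}. g l) = (\<Prod>l<i. g l) * fps_to_fls (pd (M-1-i) :: 'a fls fps)"
  proof -
    have "g (i+1+m) = 1 - Q^(m+1)" for m
    proof -
      have e: "i+1+m = i+(m+1)" by simp
      show ?thesis unfolding g_def e div_pow_add[OF Q0] by (rule refl)
    qed
    thus ?thesis unfolding prod_remove_split[OF iM] io_pd by (simp add: Q_def)
  qed
  have rat: "(\<Prod>l<i. f l) / (\<Prod>l<i. g l) = cW ^ i * (fps_to_fls (pz i :: 'a fls fps) / fps_to_fls (pd i :: 'a fls fps))"
  proof -
    have "(\<Prod>l<i. f l) / (\<Prod>l<i. g l) = (\<Prod>l<i. f l / g l)" by (rule prod_dividef[symmetric])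
    also have "\<dots> = (\<Prod>m<i. f (i - Suc m) / g (i - Suc m))"
      by (rule prod.nat_diff_reindex[symmetric])
    also have "\<dots> = (\<Prod>m<i. cW * ((1 - cZ * Q^(m+1)) / (1 - Q^(m+1))))"
    proof (intro prod.cong refl)
      fix m assume "m \<in> {..<i}"
      hence m: "m < i" by simp
      have QQ: "Q^(i - Suc m) / Q^i = inverse (Q^(m+1))"
      proof -
        have "Q^i = Q^(i - Suc m) * Q^(m+1)"
        proof -
          have "(i - Suc m) + (m+1) = i" using m by simp
          thus ?thesis by (metis power_add)
        qed
        thus ?thesis using Q0 by (simp add: field_simps)
      qed
      have P1: "1 - Q^(m+1) \<noteq> 0"
      proof
        assume "1 - Q^(m+1) = 0"
        hence "(1 - Q^(m+1)) $$ 0 = 0" by simp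
        thus False by (simp add: Q_def)
      qed
      have "f (i - Suc m) / g (i - Suc m) = (1 - cW * inverse (Q^(m+1))) / (1 - inverse (Q^(m+1)))"
        unfolding f_def g_def using QQ by (simp add: times_divide_eq_right[symmetric] del: times_divide_eq_right)
      also have "\<dots> = cW * (1 - cZ * Q^(m+1)) / (1 - Q^(m+1))"
        by (rule field_aux2[OF WZ _ P1]) (simp add: Q0)
      finally show "f (i - Suc m) / g (i - Suc m) = cW * ((1 - cZ * Q^(m+1)) / (1 - Q^(m+1)))" by simp
    qed
    also have "\<dots> = cW ^ i * ((\<Prod>m<i. (1 - cZ * Q^(m+1))) / (\<Prod>m<i. (1 - Q^(m+1))))"
      by (simp add: prod.distrib prod_dividef)
    also have "(\<Prod>m<i. (1 - cZ * Q^(m+1))) = fps_to_fls (pz i :: 'a fls fps)"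
      by (simp add: io_pz cZ_def Q_def)
    also have "(\<Prod>m<i. (1 - Q^(m+1))) = fps_to_fls (pd i :: 'a fls fps)"
      by (simp add: io_pd Q_def)
    finally show ?thesis .
  qed
  have "(\<Prod>l<M. f l) / (\<Prod>l\<in>{..<M}-{i}. g l)
        = ((\<Prod>l<i. f l) / (\<Prod>l<i. g l)) * (fps_to_fls (pw (M-i) :: 'a fls fps) / fps_to_fls (pd (M-1-i) :: 'a fls fps))"
    unfolding num den by (rule times_divide_times_eq[symmetric])
  also have "\<dots> = cW ^ i * fps_to_fls (gg (M-i) i i (M-1-i) :: 'a fls fps)"
    unfolding rat io_gg by (simp add: field_simps)
  finally show ?thesis by (simp add: f_def g_def cW_def Q_def)
qed


lemma nth0_one_plus_monom:
  "(1 + zpow k * fps_X ^ j :: 'a::field fls fps) $ 0 = (if j = 0 then 1 + fls_X_inv powi k else 1)"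
  by (simp add: zpow_def)

lemma io_ta: "fps_to_fls (ta k :: 'a::field fls fps) = inverse (1 + fls_const fls_X_inv ^ 2 * fls_X ^ k)"
proof -
  have "(1 + zpow 2 * fps_X ^ k :: 'a fls fps) $ 0 \<noteq> 0"
    using one_plus_Zsq_nz[where 'a='a] by (simp add: zpow_def)
  thus ?thesis by (simp add: ta_def io_inverse io_mult io_zpow2 io_Xpow)
qed

lemma io_tb: "fps_to_fls (tb m :: 'a::field fls fps) =
   fls_const fls_X ^ 2 * fls_X ^ (m+1) / (1 + fls_const fls_X ^ 2 * fls_X ^ (m+1))"
proof -
  have "(1 + zpow (-2) * fps_X ^ (m+1) :: 'a fls fps) $ 0 \<noteq> 0"
    by (simp add: nth0_one_plus_monom)
  thus ?thesis
    by (simp add: tb_def io_inverse io_mult io_zpowm2 io_Xpow divide_inverse del: power_Suc)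
qed

lemma fls_nz_by_nth: "(f :: 'k::zero fls) $$ n \<noteq> 0 \<Longrightarrow> f \<noteq> 0"
  by auto

lemma gg_cong: "a = a' \<Longrightarrow> b = b' \<Longrightarrow> c = c' \<Longrightarrow> d = d' \<Longrightarrow> gg a b c d = gg a' b' c' d'"
  by simp

theorem finite_identity: "FN N = (RN N :: 'a::field fls fps)"
proof -
  define Q :: "'a fls fls" where "Q = fls_X"
  define cW :: "'a fls fls" where "cW = fls_const fls_X"
  define cZ :: "'a fls fls" where "cZ = fls_const fls_X_inv"
  define b where "b = - (cZ^2) * inverse (Q^N)"
  have WZ: "cW * cZ = 1" using cWZ by (simp add: cW_def cZ_def)
  have W0: "cW \<noteq> 0" using WZ by auto
  have Q0: "Q \<noteq> 0" by (simp add: Q_def)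
  have WZ2: "cW * cZ^2 = cZ" using WZ by (simp add: power2_eq_square mult.assoc[symmetric])
  have bk: "b * Q^(N+k) = - (cZ^2 * Q^k)" for k
    using Q0 by (simp add: b_def power_add)
  have bm: "b * Q^(N - Suc m) = - (cZ^2 * inverse (Q^(m+1)))" if "m < N" for m
  proof -
    have "(N - Suc m) + (m+1) = N" using that by simp
    hence "Q^N = Q^(N - Suc m) * Q^(m+1)" by (metis power_add)
    thus ?thesis using Q0 by (simp add: b_def)
  qed
  have Cnz: "1 + cZ^2 * Q^k \<noteq> 0" for k
  proof -
    have e: "1 + cZ^2 * Q^k = fps_to_fls (1 + zpow 2 * fps_X^k :: 'a fls fps)"
      by (simp add: io_mult io_zpow2 io_Xpow cZ_def Q_def)
    have "(1 + zpow 2 * fps_X^k :: 'a fls fps) $ 0 \<noteq> 0"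
      using one_plus_Zsq_nz[where 'a='a] by (simp add: zpow_def)
    hence "(1 + zpow 2 * fps_X^k :: 'a fls fps) \<noteq> 0" by (metis fps_zero_nth)
    thus ?thesis unfolding e by (metis fps_to_fls_eq_0_iff)
  qed
  have Dnz: "1 + cW^2 * Q^(m+1) \<noteq> 0" for m
  proof -
    have e: "1 + cW^2 * Q^(m+1) = fps_to_fls (1 + zpow (-2) * fps_X^(m+1) :: 'a fls fps)"
      by (simp add: io_mult io_zpowm2 io_Xpow cW_def Q_def del: power_Suc)
    have "(1 + zpow (-2) * fps_X^(m+1) :: 'a fls fps) $ 0 \<noteq> 0"
      by (simp add: zpow_def)
    hence "(1 + zpow (-2) * fps_X^(m+1) :: 'a fls fps) \<noteq> 0" by (metis fps_zero_nth)
    thus ?thesis unfolding e by (metis fps_to_fls_eq_0_iff)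
  qed
  have P0: "Q^(m+1) \<noteq> 0" for m using Q0 by simp
  have rk: "(1 - cW * b * Q^(N+k)) / (1 - b * Q^(N+k))
            = fps_to_fls (1 + zpow 1 * fps_X ^ k :: 'a fls fps) / fps_to_fls (1 + zpow 2 * fps_X ^ k :: 'a fls fps)" for k
  proof -
    have ck: "cW * b * Q^(N+k) = - (cZ * Q^k)"
      by (simp add: mult.assoc bk) (simp add: WZ2 mult.assoc[symmetric])
    show ?thesis by (simp only: ck bk) (simp add: io_mult io_zpow1 io_zpow2 io_Xpow cZ_def Q_def)
  qed
  have dk: "1 / (1 - b * Q^(N+k)) = fps_to_fls (ta k :: 'a fls fps)" for k
    by (simp only: bk) (simp add: io_ta cZ_def Q_def divide_inverse)
  have rm: "(1 - cW * b * Q^(N - Suc m)) / (1 - b * Q^(N - Suc m))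
            = cW * fps_to_fls (1 + zpow (-1) * fps_X ^ (m+1) :: 'a fls fps) / fps_to_fls (1 + zpow (-2) * fps_X ^ (m+1) :: 'a fls fps)"
    if "m < N" for m
  proof -
    have "(1 - cW * b * Q^(N - Suc m)) / (1 - b * Q^(N - Suc m)) = cW * (1 + cW * Q^(m+1)) / (1 + cW^2 * Q^(m+1))"
      using field_aux1(2)[OF WZ P0[of m] Dnz[of m]] by (simp add: mult.assoc bm[OF that])
    thus ?thesis by (simp add: io_mult io_zpowm1 io_zpowm2 io_Xpow cW_def Q_def del: power_Suc)
  qed
  have dm: "1 / (1 - b * Q^(N - Suc m)) = fps_to_fls (tb m :: 'a fls fps)" if "m < N" for m
    using field_aux1(3)[OF WZ P0[of m] Dnz[of m]] by (simp only: bm[OF that]) (simp add: io_tb cW_def Q_def del: power_Suc)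
  have den_nz: "1 - b * Q^i \<noteq> 0" if "i < 2*N" for i
  proof (cases "i < N")
    case True
    hence i: "i = N - Suc (N - Suc i)" by simp
    show ?thesis using field_aux1(1)[OF WZ P0[of "N - Suc i"] Dnz[of "N - Suc i"]] True
      by (subst i, subst bm) auto
  next
    case False
    hence i: "i = N + (i - N)" by simp
    show ?thesis using Cnz[of "i - N"] by (subst i, subst bk) simp
  qed
  have inj: "inj_on (\<lambda>i. Q^i) {..<2*N}"
    by (auto simp: inj_on_def Q_def intro: fls_X_power_inj)
  note PF = partial_fractions[of "\<lambda>i. Q^i" "2*N" b cW, OF inj _ den_nz]
  define \<rho> where "\<rho> i = (\<Prod>l<2*N. (1 - cW * Q^l / Q^i)) / (\<Prod>l\<in>{..<2*N}-{i}. (1 - Q^l / Q^i))" for i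
  have rho: "\<rho> i = cW ^ i * fps_to_fls (gg (2*N-i) i i (2*N-1-i) :: 'a fls fps)" if "i < 2*N" for i
    unfolding \<rho>_def using rho_closed[OF that, where 'a='a] by (simp add: cW_def Q_def)
  have PF': "(\<Prod>i<2*N. (1 - cW * b * Q^i) / (1 - b * Q^i)) = cW ^ (2*N) + (\<Sum>i<2*N. \<rho> i / (1 - b * Q^i))"
    unfolding \<rho>_def using PF Q0 by simp
  have LHS: "(\<Prod>i<2*N. (1 - cW * b * Q^i) / (1 - b * Q^i)) = cW ^ N * fps_to_fls (FN N)"
  proof -
    define r where "r i = (1 - cW * b * Q^i) / (1 - b * Q^i)" for i
    have "(\<Prod>i<2*N. r i) = (\<Prod>i<N+N. r i)" by (simp add: mult_2)
    also have "\<dots> = (\<Prod>i<N. r i) * (\<Prod>k<N. r (N+k))" by (rule prod_split)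
    also have "(\<Prod>i<N. r i) = (\<Prod>m<N. r (N - Suc m))" by (rule prod.nat_diff_reindex[symmetric])
    also have "\<dots> = (\<Prod>m<N. cW * fps_to_fls (1 + zpow (-1) * fps_X ^ (m+1) :: 'a fls fps) / fps_to_fls (1 + zpow (-2) * fps_X ^ (m+1) :: 'a fls fps))"
      by (intro prod.cong refl) (simp add: r_def rm)
    also have "\<dots> = cW ^ N * (fps_to_fls (pa' N) / fps_to_fls (pc' N))"
      by (simp add: prod.distrib prod_dividef pa'_def pc'_def io_prod)
    also have "(\<Prod>k<N. r (N+k)) = fps_to_fls (pa N) / fps_to_fls (pc0 N)"
      by (simp add: r_def rk prod_dividef pa_def pc0_def io_prod)
    finally have ch: "(\<Prod>i<2*N. r i) = cW ^ N * (fps_to_fls (pa' N) / fps_to_fls (pc' N)) * (fps_to_fls (pa N) / fps_to_fls (pc0 N))" .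
    have fn: "fps_to_fls (pa' N) / fps_to_fls (pc' N) * (fps_to_fls (pa N) / fps_to_fls (pc0 N))
               = fps_to_fls (FN N :: 'a fls fps)"
    proof -
      have "(pc0 N * pc' N :: 'a fls fps) $ 0 \<noteq> 0"
        using one_plus_Zsq_nz[where 'a='a]
        by (simp add: pc0_def pc'_def prod_nth0 zpow_def prod_zero_iff)
      thus ?thesis by (simp add: FN_def io_mult io_inverse divide_inverse mult_ac)
    qed
    have e: "(\<Prod>i<2*N. (1 - cW * b * Q^i) / (1 - b * Q^i)) = (\<Prod>i<2*N. r i)" by (simp add: r_def)
    have as: "cW ^ N * (fps_to_fls (pa' N) / fps_to_fls (pc' N)) * (fps_to_fls (pa N) / fps_to_fls (pc0 N))
      = cW ^ N * ((fps_to_fls (pa' N) / fps_to_fls (pc' N)) * (fps_to_fls (pa N) / fps_to_fls (pc0 N)))"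
      by (rule mult.assoc)
    show ?thesis unfolding e ch as fn by (rule refl)
  qed
  have RHS: "cW ^ (2*N) + (\<Sum>i<2*N. \<rho> i / (1 - b * Q^i)) = cW ^ N * fps_to_fls (RN N)"
  proof -
    define s where "s i = \<rho> i / (1 - b * Q^i)" for i
    have "(\<Sum>i<2*N. s i) = (\<Sum>i<N+N. s i)" by (simp add: mult_2)
    also have "\<dots> = (\<Sum>i<N. s i) + (\<Sum>k<N. s (N+k))" by (rule sum_split)
    also have "(\<Sum>i<N. s i) = (\<Sum>m<N. s (N - Suc m))" by (rule sum.nat_diff_reindex[symmetric])
    also have "\<dots> = (\<Sum>m<N. cW ^ N * fps_to_fls (zpow (int m + 1) * gg (N + 1 + m) (N - 1 - m) (N - 1 - m) (N + m) * tb m :: 'a fls fps))"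
    proof (intro sum.cong refl)
      fix m assume "m \<in> {..<N}"
      hence m: "m < N" by simp
      have i1: "gg (2*N - (N - Suc m)) (N - Suc m) (N - Suc m) (2*N - 1 - (N - Suc m))
               = (gg (N + 1 + m) (N - 1 - m) (N - 1 - m) (N + m) :: 'a fls fps)"
        by (rule gg_cong) (use m in arith)+
      have rl: "N - Suc m < 2 * N" using m by arith
      have pw: "cW ^ N * cZ ^ (Suc m) = cW ^ (N - Suc m)"
      proof -
        have eqN: "cW ^ N = cW ^ (N - Suc m) * cW ^ Suc m"
        proof -
          have "(N - Suc m) + Suc m = N" using m by simp
          thus ?thesis by (metis power_add)
        qed
        have p1: "cW ^ Suc m * cZ ^ Suc m = 1" by (metis WZ power_mult_distrib power_one)
        have "cW ^ N * cZ ^ Suc m = cW ^ (N - Suc m) * (cW ^ Suc m * cZ ^ Suc m)"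
          unfolding eqN by (rule mult.assoc)
        thus ?thesis unfolding p1 by simp
      qed
      have "s (N - Suc m) = cW ^ (N - Suc m) * fps_to_fls (gg (N + 1 + m) (N - 1 - m) (N - 1 - m) (N + m) :: 'a fls fps) * fps_to_fls (tb m :: 'a fls fps)"
      proof -
        have "s (N - Suc m) = \<rho> (N - Suc m) * (1 / (1 - b * Q ^ (N - Suc m)))"
          unfolding s_def by simp
        also have "\<dots> = cW ^ (N - Suc m) * fps_to_fls (gg (2*N - (N - Suc m)) (N - Suc m) (N - Suc m) (2*N - 1 - (N - Suc m)) :: 'a fls fps) * fps_to_fls (tb m :: 'a fls fps)"
          unfolding dm[OF m] rho[of "N - Suc m", OF rl] ..
        finally show ?thesis unfolding i1 .
      qed
      also have "\<dots> = cW ^ N * fps_to_fls (zpow (int m + 1) * gg (N + 1 + m) (N - 1 - m) (N - 1 - m) (N + m) * tb m :: 'a fls fps)"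
      proof -
        have zz: "zpow (int m + 1) = (zpow (int (Suc m)) :: 'a fls fps)" by (simp add: add.commute)
        have "cW ^ N * fps_to_fls (zpow (int m + 1) * gg (N + 1 + m) (N - 1 - m) (N - 1 - m) (N + m) * tb m :: 'a fls fps)
           = (cW ^ N * cZ ^ Suc m) * fps_to_fls (gg (N + 1 + m) (N - 1 - m) (N - 1 - m) (N + m) :: 'a fls fps) * fps_to_fls (tb m :: 'a fls fps)"
          unfolding zz io_mult io_zpow_nat cZ_def by (simp only: mult.assoc)
        thus ?thesis unfolding pw by simp
      qed
      finally show "s (N - Suc m) = \<dots>" .
    qed
    also have "(\<Sum>k<N. s (N+k)) = (\<Sum>k<N. cW ^ N * fps_to_fls (zpow (- int k) * gg (N - k) (N + k) (N + k) (N - 1 - k) * ta k :: 'a fls fps))"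
    proof (intro sum.cong refl)
      fix k assume "k \<in> {..<N}"
      hence k: "k < N" by simp
      have i1: "gg (2*N - (N + k)) (N + k) (N + k) (2*N - 1 - (N + k))
               = (gg (N - k) (N + k) (N + k) (N - 1 - k) :: 'a fls fps)"
        by (rule gg_cong) (use k in arith)+
      have rl: "N + k < 2 * N" using k by arith
      have "s (N + k) = cW ^ (N + k) * fps_to_fls (gg (N - k) (N + k) (N + k) (N - 1 - k) :: 'a fls fps) * fps_to_fls (ta k :: 'a fls fps)"
      proof -
        have "s (N + k) = \<rho> (N + k) * (1 / (1 - b * Q ^ (N + k)))"
          unfolding s_def by simp
        also have "\<dots> = cW ^ (N + k) * fps_to_fls (gg (2*N - (N + k)) (N + k) (N + k) (2*N - 1 - (N + k)) :: 'a fls fps) * fps_to_fls (ta k :: 'a fls fps)"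
          unfolding dk[of k] rho[of "N + k", OF rl] ..
        finally show ?thesis unfolding i1 .
      qed
      also have "\<dots> = cW ^ N * fps_to_fls (zpow (- int k) * gg (N - k) (N + k) (N + k) (N - 1 - k) * ta k :: 'a fls fps)"
        by (simp add: io_mult io_zpow_neg_nat power_add cW_def mult_ac)
      finally show "s (N + k) = \<dots>" .
    qed
    finally have sums: "(\<Sum>i<2*N. s i) =
       (\<Sum>m<N. cW ^ N * fps_to_fls (zpow (int m + 1) * gg (N + 1 + m) (N - 1 - m) (N - 1 - m) (N + m) * tb m :: 'a fls fps)) +
       (\<Sum>k<N. cW ^ N * fps_to_fls (zpow (- int k) * gg (N - k) (N + k) (N + k) (N - 1 - k) * ta k :: 'a fls fps))" .
    have c2: "cW ^ (2*N) = cW ^ N * fps_to_fls (fps_const (fls_X ^ N) :: 'a fls fps)"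
      by (simp add: cW_def fls_const_power power_add mult_2)
    have rn: "cW ^ N * fps_to_fls (RN N) = cW ^ N * fps_to_fls (fps_const (fls_X ^ N) :: 'a fls fps) +
       (\<Sum>k<N. cW ^ N * fps_to_fls (zpow (- int k) * gg (N - k) (N + k) (N + k) (N - 1 - k) * ta k :: 'a fls fps)) +
       (\<Sum>m<N. cW ^ N * fps_to_fls (zpow (int m + 1) * gg (N + 1 + m) (N - 1 - m) (N - 1 - m) (N + m) * tb m :: 'a fls fps))"
      unfolding RN_def by (simp only: fps_to_fls_plus io_sum distrib_left sum_distrib_left)
    have e: "(\<Sum>i<2*N. \<rho> i / (1 - b * Q^i)) = (\<Sum>i<2*N. s i)" by (simp add: s_def)
    show ?thesis unfolding e sums c2 rn by (simp only: add_ac)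
  qed
  have h: "cW ^ N * fps_to_fls (FN N :: 'a fls fps) = cW ^ N * fps_to_fls (RN N :: 'a fls fps)"
    using LHS RHS PF' by argo
  have "fps_to_fls (FN N :: 'a fls fps) = fps_to_fls (RN N :: 'a fls fps)"
  proof -
    have "cW ^ N \<noteq> 0" using W0 by simp
    thus ?thesis using h by auto
  qed
  thus ?thesis by (rule fps_to_fls_eq_imp_fps_eq)
qed


unbundle fps_syntax

lemma fac_plus: "j \<le> k \<Longrightarrow> eqm j (1 + F * fps_X ^ k) (1 :: 'a::field fls fps)"
  using eqm_add[OF eqm_refl[of j 1] eqm_Xpow'[of j k F]] by simp
lemma fac_minus: "j \<le> k \<Longrightarrow> eqm j (1 - F * fps_X ^ k) (1 :: 'a::field fls fps)"
  using eqm_diff[OF eqm_refl[of j 1] eqm_Xpow'[of j k F]] by simp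
lemma fac_minus1: "j \<le> k \<Longrightarrow> eqm j (1 - fps_X ^ k) (1 :: 'a::field fls fps)"
  using fac_minus[of j k 1] by simp

definition "PA = qz_prodinf (\<lambda>i. 1 + zpow 1 * fps_X ^ i)"
definition "PA' = qz_prodinf (\<lambda>i. 1 + zpow (-1) * fps_X ^ (i + 1))"
definition "PB = qz_prodinf (\<lambda>i. 1 - zpow (-1) * fps_X ^ i)"
definition "PB' = qz_prodinf (\<lambda>i. 1 - zpow 1 * fps_X ^ (i + 1))"
definition "PC = qz_prodinf (\<lambda>i. 1 + zpow 2 * fps_X ^ (i + 1))"
definition "PC0 = qz_prodinf (\<lambda>i. 1 + zpow 2 * fps_X ^ i)"
definition "PC' = qz_prodinf (\<lambda>i. 1 + zpow (-2) * fps_X ^ (i + 1))"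
definition "PD = qz_prodinf (\<lambda>i. 1 - fps_X ^ (i + 1))"

lemma eqm_pa: "eqm N (pa N) (PA :: 'a::field fls fps)"
  unfolding pa_def PA_def by (rule prodinf_eqm) (rule fac_plus, simp)
lemma eqm_pa': "eqm N (pa' N) (PA' :: 'a::field fls fps)"
  unfolding pa'_def PA'_def by (rule prodinf_eqm) (rule fac_plus, simp)
lemma eqm_pw: "eqm N (pw N) (PB :: 'a::field fls fps)"
  unfolding pw_def PB_def by (rule prodinf_eqm) (rule fac_minus, simp)
lemma eqm_pz: "eqm N (pz N) (PB' :: 'a::field fls fps)"
  unfolding pz_def PB'_def by (rule prodinf_eqm) (rule fac_minus, simp)
lemma eqm_pd: "eqm N (pd N) (PD :: 'a::field fls fps)"
  unfolding pd_def PD_def by (rule prodinf_eqm) (rule fac_minus1, simp)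
lemma eqm_pc0: "eqm N (pc0 N) (PC0 :: 'a::field fls fps)"
  unfolding pc0_def PC0_def by (rule prodinf_eqm) (rule fac_plus, simp)
lemma eqm_pc': "eqm N (pc' N) (PC' :: 'a::field fls fps)"
  unfolding pc'_def PC'_def by (rule prodinf_eqm) (rule fac_plus, simp)
lemma eqm_pc: "eqm N (\<Prod>j<N. 1 + zpow 2 * fps_X ^ (j + 1)) (PC :: 'a::field fls fps)"
  unfolding PC_def by (rule prodinf_eqm) (rule fac_plus, simp)

lemma PC0_eq: "PC0 = (1 + zpow 2) * (PC :: 'a::field fls fps)"
proof (rule eqm_all)
  fix N
  have "pc0 (Suc N) = (1 + zpow 2) * (\<Prod>j<N. 1 + zpow 2 * fps_X ^ (j + 1) :: 'a fls fps)"
    unfolding pc0_def by (subst prod.lessThan_Suc_shift) simp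
  moreover have "eqm N ((1 + zpow 2) * (\<Prod>j<N. 1 + zpow 2 * fps_X ^ (j + 1))) ((1 + zpow 2) * (PC :: 'a fls fps))"
    by (rule eqm_mult[OF eqm_refl eqm_pc])
  ultimately have h1: "eqm N (pc0 (Suc N)) ((1 + zpow 2) * (PC :: 'a fls fps))" by simp
  have h2: "eqm N (pc0 (Suc N)) (PC0 :: 'a fls fps)" by (rule eqm_mono[OF eqm_pc0]) simp
  show "eqm N (PC0 :: 'a fls fps) ((1 + zpow 2) * PC)" by (rule eqm_trans[OF eqm_sym[OF h2] h1])
qed

definition "Ginf = PB * PB' * inverse (PD * (PD :: 'a::field fls fps))"
definition "Phi = PA * PA' * inverse (PC0 * (PC' :: 'a::field fls fps))"

lemma PD_nth0: "PD $ 0 = (1 :: 'a::field fls)"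
  using eqm_pd[of 1, where 'a='a] pd_nth0[of 1, where 'a='a] by (simp add: eqm_def)

lemma gg_eqm:
  assumes "L \<le> a" "L \<le> b" "L \<le> c" "L \<le> d"
  shows "eqm L (gg a b c d) (Ginf :: 'a::field fls fps)"
  unfolding gg_def Ginf_def
proof (intro eqm_mult eqm_inverse)
  show "eqm L (pw a) (PB :: 'a fls fps)" using eqm_mono[OF eqm_pw assms(1)] .
  show "eqm L (pz b) (PB' :: 'a fls fps)" using eqm_mono[OF eqm_pz assms(2)] .
  show "eqm L (pd c) (PD :: 'a fls fps)" using eqm_mono[OF eqm_pd assms(3)] .
  show "eqm L (pd d) (PD :: 'a fls fps)" using eqm_mono[OF eqm_pd assms(4)] .
  show "(pd c * pd d :: 'a fls fps) $ 0 \<noteq> 0" by (simp add: pd_nth0)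
qed

lemma pc_nth0: "(pc0 N * pc' N :: 'a::field fls fps) $ 0 \<noteq> 0"
  using one_plus_Zsq_nz[where 'a='a]
  by (simp add: pc0_def pc'_def prod_nth0 zpow_def prod_zero_iff)

lemma FN_eqm: "eqm N (FN N) (Phi :: 'a::field fls fps)"
  unfolding FN_def Phi_def
  by (intro eqm_mult eqm_inverse eqm_pa eqm_pa' eqm_pc0 eqm_pc' pc_nth0)


unbundle fps_syntax

definition aa :: "nat \<Rightarrow> 'a::field fls fps" where "aa r = zpow (- int r) * ta r"
definition bb :: "nat \<Rightarrow> 'a::field fls fps" where "bb m = zpow (int m + 1) * tb m"
definition uu :: "nat \<Rightarrow> 'a::field fls fps" where "uu k = aa (k + 1) + bb k"
definition Vs :: "nat \<Rightarrow> 'a::field fls fps" where "Vs M = (\<Sum>k<M. uu k - fps_const (fls_X ^ (k + 1)))"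
definition Vinf :: "'a::field fls fps" where "Vinf = Abs_fps (\<lambda>n. Vs (Suc n) $ n)"
definition Sinf :: "'a::field fls fps" where "Sinf = fps_const (fls_X / (1 - fls_X)) + Vinf"

lemma ta_eqm1: "eqm r (ta r) (1 :: 'a::field fls fps)"
proof (cases r)
  case 0 thus ?thesis by (simp add: eqm_def)
next
  case (Suc r')
  have "eqm r (1 + zpow 2 * fps_X ^ r) (1 :: 'a fls fps)" by (rule fac_plus) simp
  moreover have "(1 + zpow 2 * fps_X ^ r :: 'a fls fps) $ 0 \<noteq> 0" using Suc by simp
  ultimately have "eqm r (inverse (1 + zpow 2 * fps_X ^ r)) (inverse (1 :: 'a fls fps))"
    by (rule eqm_inverse)
  thus ?thesis by (simp add: ta_def)
qed

lemma tb_eqm0: "eqm (m + 1) (tb m) (0 :: 'a::field fls fps)"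
proof -
  have "eqm (m + 1) (zpow (-2) * fps_X ^ (m + 1) * inverse (1 + zpow (-2) * fps_X ^ (m + 1)))
          (0 * inverse (1 + zpow (-2) * fps_X ^ (m + 1)) :: 'a fls fps)"
    by (rule eqm_mult[OF eqm_Xpow' eqm_refl]) simp
  thus ?thesis by (simp add: tb_def)
qed

lemma bb_eqm0: "eqm (m + 1) (bb m) (0 :: 'a::field fls fps)"
  using eqm_mult[OF eqm_refl[of "m+1" "zpow (int m + 1)"] tb_eqm0[of m]] by (simp add: bb_def)

lemma uu_eqm: "eqm (k + 1) (uu k - fps_const (fls_X ^ (k + 1))) (0 :: 'a::field fls fps)"
proof -
  have e: "uu k - fps_const (fls_X ^ (k + 1)) = fps_const (fls_X ^ (k + 1)) * (ta (k + 1) - 1) + (bb k :: 'a fls fps)"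
  proof -
    have z: "zpow (- int (k+1)) = (fps_const (fls_X ^ (k+1)) :: 'a fls fps)" by (rule zpow_neg_nat)
    show ?thesis unfolding uu_def aa_def z by (simp add: algebra_simps)
  qed
  have "eqm (k + 1) (ta (k + 1) - 1) (1 - 1 :: 'a fls fps)"
    by (rule eqm_diff[OF ta_eqm1 eqm_refl])
  hence "eqm (k + 1) (fps_const (fls_X ^ (k + 1)) * (ta (k + 1) - 1)) (fps_const (fls_X ^ (k + 1)) * (1 - 1) :: 'a fls fps)"
    by (rule eqm_mult[OF eqm_refl])
  hence "eqm (k + 1) (fps_const (fls_X ^ (k + 1)) * (ta (k + 1) - 1) + bb k) (0 + 0 :: 'a fls fps)"
    using bb_eqm0 eqm_add by fastforce
  thus ?thesis unfolding e by simp
qed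

lemma eqm_sum0: "(\<And>k. k \<in> S \<Longrightarrow> eqm M (f k) 0) \<Longrightarrow> eqm M (\<Sum>k\<in>S. f k) (0 :: 'a::field fls fps)"
proof (induction S rule: infinite_finite_induct)
  case (insert x F)
  hence "eqm M (f x + (\<Sum>k\<in>F. f k)) (0 + 0)" by (intro eqm_add) auto
  thus ?case using insert by simp
qed auto

lemma sum_stable:
  assumes "\<And>k. eqm (k + 1) (f k) (0 :: 'a::field fls fps)" "N \<le> N'"
  shows "eqm N (\<Sum>k<N. f k) (\<Sum>k<N'. f k)"
proof -
  have "(\<Sum>k<N'. f k) = (\<Sum>k<N. f k) + (\<Sum>k\<in>{N..<N'}. f k)"
    using sum.atLeastLessThan_concat[of 0 N N' f] assms(2) by (simp add: atLeast0LessThan)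
  moreover have "eqm N (\<Sum>k\<in>{N..<N'}. f k) 0"
    by (rule eqm_sum0) (auto intro: eqm_mono[OF assms(1)])
  ultimately show ?thesis
    using eqm_add[OF eqm_refl[of N "\<Sum>k<N. f k"] eqm_sym[of N "\<Sum>k\<in>{N..<N'}. f k" 0]] by simp
qed

lemma Vs_eqm: "eqm N (Vs N) (Vinf :: 'a::field fls fps)"
  unfolding Vinf_def
  by (rule stable_limit) (unfold Vs_def, rule sum_stable[OF uu_eqm])

lemma fps_const_sum': "fps_const (\<Sum>k\<in>S. f k) = (\<Sum>k\<in>S. fps_const (f k :: 'a::field fls))"
  by (induction S rule: infinite_finite_induct) (auto simp del: fps_const_add simp: fps_const_add[symmetric])

lemma geom_fls:
  "(\<Sum>k<M. (fls_X :: 'a::field fls) ^ (k + 1)) - fls_X / (1 - fls_X) = - (fls_X ^ (M + 1) / (1 - fls_X))"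
proof (induction M)
  case 0 thus ?case by simp
next
  case (Suc M)
  have nz: "1 - (fls_X :: 'a fls) \<noteq> 0" by (rule one_minus_W_nz)
  have "(\<Sum>k<Suc M. (fls_X :: 'a fls) ^ (k + 1)) - fls_X / (1 - fls_X)
        = ((\<Sum>k<M. fls_X ^ (k + 1)) - fls_X / (1 - fls_X)) + fls_X ^ (M + 1)" by simp
  also have "\<dots> = - (fls_X ^ (M + 1) / (1 - fls_X)) + fls_X ^ (M + 1)" using Suc by simp
  also have "\<dots> = - (fls_X ^ (Suc M + 1) / (1 - fls_X))"
    using nz by (simp add: field_simps)
  finally show ?case .
qed

lemma lowv_geom: "lowv ((fls_X :: 'a::field fls) ^ (M + 1) / (1 - fls_X)) (int M + 1)"
proof -
  have "inverse (1 - (fls_X :: 'a fls)) = fps_to_fls (inverse (1 - fps_X))"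
    using fls_inverse_fps_to_fls[of "1 - (fps_X :: 'a fps)"] by simp
  hence l2: "lowv (inverse (1 - (fls_X :: 'a fls))) 0"
    using fls_subdegree_fls_to_fps_gt0 by (simp add: lowv_iff)
  have l1: "lowv ((fls_X :: 'a fls) ^ (M + 1)) (int M + 1)"
    by (simp add: lowv_iff)
  show ?thesis using lowv_mult[OF l1 l2] by (simp add: divide_inverse)
qed

lemma Ss_decomp:
  "(\<Sum>k<M. uu k) - Sinf = fps_const ((\<Sum>k<M. fls_X ^ (k + 1)) - fls_X / (1 - fls_X)) + (Vs M - (Vinf :: 'a::field fls fps))"
proof -
  have "Vs M = (\<Sum>k<M. uu k) - fps_const (\<Sum>k<M. (fls_X :: 'a fls) ^ (k + 1))"
    unfolding Vs_def fps_const_sum' by (simp add: sum_subtractf)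
  thus ?thesis by (simp add: Sinf_def algebra_simps)
qed

lemma S_small: "\<exists>M0. \<forall>M\<ge>M0. small n d ((\<Sum>k<M. uu k) - (Sinf :: 'a::field fls fps))"
proof (intro exI allI impI)
  fix M assume M: "M \<ge> max (nat d) (Suc n)"
  have "lowv ((\<Sum>k<M. (fls_X :: 'a fls) ^ (k + 1)) - fls_X / (1 - fls_X)) d"
    unfolding geom_fls using M by (intro lowv_uminus lowv_mono[OF lowv_geom]) auto
  hence "small n d (fps_const ((\<Sum>k<M. (fls_X :: 'a fls) ^ (k + 1)) - fls_X / (1 - fls_X)))"
    by (rule small_const)
  moreover have "small n d (Vs M - (Vinf :: 'a fls fps))"
    by (rule small_eqm[of M]) (use M Vs_eqm eqm_0_iff in auto)
  ultimately show "small n d ((\<Sum>k<M. uu k) - (Sinf :: 'a fls fps))"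
    unfolding Ss_decomp by (rule small_add)
qed

lemma Ss_tendsto: "qz_tendsto (\<lambda>M. \<Sum>k<M. uu k) (Sinf :: 'a::field fls fps)"
  by (rule qz_tendsto_crit) (rule S_small)


unbundle fps_syntax

lemma zpow2_const: "zpow 2 = (fps_const (fls_X_inv ^ 2) :: 'a::field fls fps)"
  by (simp add: zpow_def)
lemma zpow1_const: "zpow 1 = (fps_const fls_X_inv :: 'a::field fls fps)"
  by (simp add: zpow_def)
lemma zpowm1_const: "zpow (-1) = (fps_const fls_X :: 'a::field fls fps)"
  using zpow_neg_nat[of 1] by simp

lemma wbl_ta: assumes "r \<ge> 1" shows "wbl (ta r :: 'a::field fls fps) 0 2"
proof -
  have "wbl (1 + fps_const (fls_X_inv ^ 2) * fps_X ^ r :: 'a fls fps) 0 2"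
  proof (intro wbl_add wbl_1 wbl_monom)
    show "lowv ((fls_X_inv :: 'a fls) ^ 2) (- 2 * int r)" using assms by (simp add: lowv_iff)
  qed simp
  moreover have "(1 + fps_const (fls_X_inv ^ 2) * fps_X ^ r :: 'a fls fps) $ 0 = 1" using assms by simp
  ultimately show ?thesis unfolding ta_def zpow2_const by (intro wbl_inverse) auto
qed

lemma wbl_aa: assumes "r \<ge> 1" shows "wbl (aa r :: 'a::field fls fps) (int r) 2"
proof -
  have "wbl (fps_const (fls_X ^ r) * ta r :: 'a fls fps) (int r + 0) 2"
    by (intro wbl_mult wbl_const wbl_ta assms) (simp add: lowv_iff)
  thus ?thesis by (simp add: aa_def zpow_neg_nat)
qed

lemma wbl_pw: "wbl (pw a :: 'a::field fls fps) 0 2"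
  unfolding pw_def zpowm1_const
  by (intro wbl_prod wbl_diff wbl_1 wbl_monom) (auto simp: lowv_iff)
lemma wbl_pz: "wbl (pz a :: 'a::field fls fps) 0 2"
  unfolding pz_def zpow1_const
  by (intro wbl_prod wbl_diff wbl_1 wbl_monom) (auto simp: lowv_iff)
lemma wbl_pd: "wbl (pd a :: 'a::field fls fps) 0 2"
proof -
  have "wbl (\<Prod>m<a. 1 - fps_const 1 * fps_X ^ (m + 1) :: 'a fls fps) 0 2"
    by (intro wbl_prod wbl_diff wbl_1 wbl_monom) (auto simp: lowv_iff)
  thus ?thesis by (simp add: pd_def)
qed

lemma wbl_gg: "wbl (gg a b c d :: 'a::field fls fps) 0 2"
proof -
  have "wbl (pw a * pz b * inverse (pd c * pd d) :: 'a fls fps) (0 + 0 + 0) 2"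
  proof (intro wbl_mult wbl_pw wbl_pz wbl_inverse)
    show "wbl (pd c * pd d :: 'a fls fps) 0 2" using wbl_mult[OF wbl_pd wbl_pd] by simp
    show "(pd c * pd d :: 'a fls fps) $ 0 = 1" by (simp add: pd_nth0)
  qed simp
  thus ?thesis by (simp add: gg_def)
qed

lemma wbl_Ginf: "wbl (Ginf :: 'a::field fls fps) 0 2"
  by (rule wbl_limit[of "\<lambda>N. gg N N N N"]) (auto intro: gg_eqm wbl_gg)

definition Tinf :: "'a::field fls fps" where "Tinf = Ginf * (ta 0 + Sinf)"

lemma aa0: "aa 0 = (ta 0 :: 'a::field fls fps)"
  by (simp add: aa_def zpow_def)

lemma RN_decomp:
  assumes N: "N = Suc M"
  shows "RN N - (Tinf :: 'a::field fls fps) =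
    fps_const (fls_X ^ N)
    + (\<Sum>r<N. aa r * (gg (N - r) (N + r) (N + r) (N - 1 - r) - Ginf))
    + (\<Sum>m<N. bb m * (gg (N + 1 + m) (N - 1 - m) (N - 1 - m) (N + m) - Ginf))
    + Ginf * ((\<Sum>k<M. uu k) - Sinf) + Ginf * bb M"
proof -
  define G :: "'a fls fps" where "G = Ginf"
  define A where "A r = (gg (N - r) (N + r) (N + r) (N - 1 - r) :: 'a fls fps)" for r
  define B where "B m = (gg (N + 1 + m) (N - 1 - m) (N - 1 - m) (N + m) :: 'a fls fps)" for m
  have e1: "zpow (- int r) * A r * ta r = aa r * (A r - G) + G * aa r" for r
    by (simp add: aa_def algebra_simps)
  have e2: "zpow (int m + 1) * B m * tb m = bb m * (B m - G) + G * bb m" for m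
    by (simp add: bb_def algebra_simps)
  have RN: "RN N = fps_const (fls_X ^ N) + (\<Sum>r<N. aa r * (A r - G)) + G * (\<Sum>r<N. aa r)
                   + (\<Sum>m<N. bb m * (B m - G)) + G * (\<Sum>m<N. bb m)"
  proof -
    have "RN N = fps_const (fls_X ^ N) + (\<Sum>r<N. zpow (- int r) * A r * ta r) + (\<Sum>m<N. zpow (int m + 1) * B m * tb m)"
      by (simp add: RN_def A_def B_def)
    also have "\<dots> = fps_const (fls_X ^ N) + (\<Sum>r<N. aa r * (A r - G) + G * aa r) + (\<Sum>m<N. bb m * (B m - G) + G * bb m)"
      by (simp only: e1 e2)
    finally show ?thesis by (simp only: sum.distrib sum_distrib_left[symmetric] add.assoc)
  qed
  have sa: "(\<Sum>r<N. aa r) = ta 0 + (\<Sum>k<M. aa (k + 1))"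
    unfolding N by (subst sum.lessThan_Suc_shift) (simp add: aa0)
  have sb: "(\<Sum>m<N. bb m) = (\<Sum>k<M. bb k) + bb M"
    unfolding N by simp
  have su: "(\<Sum>k<M. uu k) = (\<Sum>k<M. aa (k + 1)) + (\<Sum>k<M. bb k)"
    by (simp add: uu_def sum.distrib)
  show ?thesis
    unfolding RN sa sb Tinf_def su by (simp add: G_def A_def B_def algebra_simps)
qed

lemma T2_small:
  assumes NN: "N \<ge> D + 3 * n + 5"
  shows "small n (int D) (\<Sum>r<N. aa r * (gg (N - r) (N + r) (N + r) (N - 1 - r) - (Ginf :: 'a::field fls fps)))"
proof (rule small_sum)
  fix r assume "r \<in> {..<N}"
  hence r: "r < N" by simp
  show "small n (int D) (aa r * (gg (N - r) (N + r) (N + r) (N - 1 - r) - (Ginf :: 'a fls fps)))"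
  proof (cases "r < D + 2 * n + 2")
    case True
    have "eqm (N - 1 - r) (gg (N - r) (N + r) (N + r) (N - 1 - r)) (Ginf :: 'a fls fps)"
      by (rule gg_eqm) auto
    hence "eqm (N - 1 - r) (gg (N - r) (N + r) (N + r) (N - 1 - r) - Ginf) (0 :: 'a fls fps)"
      by (simp add: eqm_0_iff)
    hence "eqm (N - 1 - r) (aa r * (gg (N - r) (N + r) (N + r) (N - 1 - r) - Ginf)) (aa r * 0 :: 'a fls fps)"
      by (rule eqm_mult[OF eqm_refl])
    hence e0: "eqm (N - 1 - r) (aa r * (gg (N - r) (N + r) (N + r) (N - 1 - r) - Ginf)) (0 :: 'a fls fps)" by simp
    show ?thesis by (rule small_eqm[OF e0]) (use True NN in linarith)
  next
    case False
    hence r1: "r \<ge> 1" by simp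
    have "wbl (aa r * (gg (N - r) (N + r) (N + r) (N - 1 - r) - Ginf) :: 'a fls fps) (int r + 0) 2"
      by (intro wbl_mult wbl_aa r1 wbl_diff wbl_gg wbl_Ginf)
    thus ?thesis by (rule small_wbl) (use False in auto)
  qed
qed

lemma T3_small:
  assumes NN: "N \<ge> 2 * n + 2"
  shows "small n d (\<Sum>m<N. bb m * (gg (N + 1 + m) (N - 1 - m) (N - 1 - m) (N + m) - (Ginf :: 'a::field fls fps)))"
proof (rule small_sum)
  fix m assume "m \<in> {..<N}"
  show "small n d (bb m * (gg (N + 1 + m) (N - 1 - m) (N - 1 - m) (N + m) - (Ginf :: 'a fls fps)))"
  proof (cases "m \<ge> n")
    case True
    have "eqm (m + 1) (bb m * (gg (N + 1 + m) (N - 1 - m) (N - 1 - m) (N + m) - Ginf)) (0 * (gg (N + 1 + m) (N - 1 - m) (N - 1 - m) (N + m) - Ginf) :: 'a fls fps)"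
      by (rule eqm_mult[OF bb_eqm0 eqm_refl])
    hence e0: "eqm (m + 1) (bb m * (gg (N + 1 + m) (N - 1 - m) (N - 1 - m) (N + m) - Ginf)) (0 :: 'a fls fps)" by simp
    show ?thesis by (rule small_eqm[OF e0]) (use True in linarith)
  next
    case False
    have "eqm (N - 1 - m) (gg (N + 1 + m) (N - 1 - m) (N - 1 - m) (N + m)) (Ginf :: 'a fls fps)"
      by (rule gg_eqm) auto
    hence "eqm (N - 1 - m) (gg (N + 1 + m) (N - 1 - m) (N - 1 - m) (N + m) - Ginf) (0 :: 'a fls fps)"
      by (simp add: eqm_0_iff)
    hence "eqm (N - 1 - m) (bb m * (gg (N + 1 + m) (N - 1 - m) (N - 1 - m) (N + m) - Ginf)) (bb m * 0 :: 'a fls fps)"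
      by (rule eqm_mult[OF eqm_refl])
    hence e0: "eqm (N - 1 - m) (bb m * (gg (N + 1 + m) (N - 1 - m) (N - 1 - m) (N + m) - Ginf)) (0 :: 'a fls fps)" by simp
    show ?thesis by (rule small_eqm[OF e0]) (use False NN in linarith)
  qed
qed

theorem RN_tendsto: "qz_tendsto RN (Tinf :: 'a::field fls fps)"
proof (rule qz_tendsto_crit)
  fix n :: nat and d :: int
  define D where "D = nat d"
  have dD: "d \<le> int D" by (simp add: D_def)
  obtain M1 where M1: "\<forall>M\<ge>M1. small n (int D + 2 * int n) ((\<Sum>k<M. uu k) - (Sinf :: 'a fls fps))"
    using S_small by blast
  show "\<exists>N0. \<forall>N\<ge>N0. small n d (RN N - (Tinf :: 'a fls fps))"
  proof (intro exI allI impI)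
    fix N assume N: "N \<ge> Suc (D + 3 * n + 5 + M1)"
    then obtain M where NM: "N = Suc M" by (cases N) auto
    have t1: "small n (int D) (fps_const (fls_X ^ N) :: 'a fls fps)"
      by (rule small_const) (use N in \<open>simp add: lowv_iff\<close>)
    have t2: "small n (int D) (\<Sum>r<N. aa r * (gg (N - r) (N + r) (N + r) (N - 1 - r) - (Ginf :: 'a fls fps)))"
      by (rule T2_small) (use N in linarith)
    have t3: "small n (int D) (\<Sum>m<N. bb m * (gg (N + 1 + m) (N - 1 - m) (N - 1 - m) (N + m) - (Ginf :: 'a fls fps)))"
      by (rule T3_small) (use N in linarith)
    have "small n (int D + 2 * int n + 0 - 2 * int n) (Ginf * ((\<Sum>k<M. uu k) - (Sinf :: 'a fls fps)))"
      by (rule small_mult'[OF _ wbl_Ginf]) (use M1 N NM in auto)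
    hence t4: "small n (int D) (Ginf * ((\<Sum>k<M. uu k) - (Sinf :: 'a fls fps)))" by simp
    have "eqm (M + 1) (Ginf * bb M) (Ginf * 0 :: 'a fls fps)"
      by (rule eqm_mult[OF eqm_refl bb_eqm0])
    hence e0: "eqm (M + 1) (Ginf * bb M) (0 :: 'a fls fps)" by simp
    have t5: "small n (int D) (Ginf * bb M :: 'a fls fps)"
      by (rule small_eqm[OF e0]) (use N NM in linarith)
    have "small n (int D) (RN N - (Tinf :: 'a fls fps))"
      unfolding RN_decomp[OF NM] by (intro small_add t1 t2 t3 t4 t5)
    thus "small n d (RN N - (Tinf :: 'a fls fps))" by (rule small_mono) (rule dD)
  qed
qed

theorem Phi_eq: "Phi = (Tinf :: 'a::field fls fps)"
proof -
  have "qz_tendsto FN (Phi :: 'a fls fps)" by (rule qz_tendsto_eqm) (rule FN_eqm)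
  moreover have "FN = (RN :: nat \<Rightarrow> 'a fls fps)" by (rule ext) (rule finite_identity)
  ultimately show ?thesis using RN_tendsto qz_tendsto_unique by metis
qed


unbundle fps_syntax

lemma final_alg:
  fixes a1 a2 b1 b2 c p1 p2 iD s ib1 ib2 ic ip1 ip2 :: "'b::comm_ring_1"
  assumes "ib1 * b1 = 1" "ib2 * b2 = 1" "ic * c = 1" "ip1 * p1 = 1" "ip2 * p2 = 1"
    and key: "a1 * a2 * (ic * ip1 * ip2) = b1 * b2 * (iD * iD) * (ic + s)"
  shows "a1 * a2 * (ib1 * ib2) = p1 * p2 * (iD * iD) * (1 + c * s)"
proof -
  have "a1 * a2 * (ib1 * ib2) = a1 * a2 * (ib1 * ib2) * (ic * c) * (ip1 * p1) * (ip2 * p2)"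
    using assms by simp
  also have "\<dots> = (a1 * a2 * (ic * ip1 * ip2)) * (c * p1 * p2 * ib1 * ib2)"
    by (simp add: mult_ac)
  also have "\<dots> = b1 * b2 * (iD * iD) * (ic + s) * (c * p1 * p2 * ib1 * ib2)"
    by (simp only: key)
  also have "\<dots> = (ib1 * b1) * (ib2 * b2) * p1 * p2 * (iD * iD) * (ic * c + c * s)"
    by (simp add: algebra_simps)
  also have "\<dots> = p1 * p2 * (iD * iD) * (1 + c * s)"
    using assms by simp
  finally show ?thesis .
qed

lemma nth0_lim: "eqm 1 P L \<Longrightarrow> L $ 0 = P $ 0"
  by (simp add: eqm_def)


theorem corollary3:
  fixes q :: "'a::field_char_0 fls fps"
  defines "q \<equiv> fps_X"
  shows
  "(qz_prodinf (\<lambda>i. 1 + zpow 1 * q ^ i) * qz_prodinf (\<lambda>i. 1 + zpow (-1) * q ^ (i + 1)))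
     / (qz_prodinf (\<lambda>i. 1 - zpow (-1) * q ^ i) * qz_prodinf (\<lambda>i. 1 - zpow 1 * q ^ (i + 1)))
   = (qz_prodinf (\<lambda>i. 1 + zpow 2 * q ^ (i + 1)) * qz_prodinf (\<lambda>i. 1 + zpow (-2) * q ^ (i + 1)))
       / (qz_prodinf (\<lambda>i. 1 - q ^ (i + 1))) ^ 2
     * (1 + (1 + zpow 2) * qz_suminf (\<lambda>k. let r = k + 1 in
          zpow (- int r) / (1 + zpow 2 * q ^ r)
          + q ^ r * zpow (int r - 2) / (1 + zpow (-2) * q ^ r)))"
proof -
  have sumeq: "(\<lambda>k. let r = k + 1 in
          zpow (- int r) / (1 + zpow 2 * fps_X ^ r)
          + fps_X ^ r * zpow (int r - 2) / (1 + zpow (-2) * fps_X ^ r)) = (uu :: nat \<Rightarrow> 'a fls fps)"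
  proof (rule ext)
    fix k
    have d1: "(1 + zpow 2 * fps_X ^ (k+1) :: 'a fls fps) $ 0 \<noteq> 0" by simp
    have d2: "(1 + zpow (-2) * fps_X ^ (k+1) :: 'a fls fps) $ 0 \<noteq> 0" by simp
    have z1: "zpow (int k + 1) * zpow (-2) = (zpow (int k + 1 + (-2)) :: 'a fls fps)"
      by (rule zpow_add[symmetric])
    have z2: "int (k + 1) - 2 = int k + 1 + (-2)" by simp
    show "(let r = k + 1 in zpow (- int r) / (1 + zpow 2 * fps_X ^ r)
          + fps_X ^ r * zpow (int r - 2) / (1 + zpow (-2) * fps_X ^ r)) = (uu k :: 'a fls fps)"
      unfolding Let_def fps_divide_unit[OF d1] fps_divide_unit[OF d2] uu_def aa_def bb_def ta_def tb_def
        z2 z1[symmetric]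
      by (simp add: mult_ac)
  qed
  have S: "qz_suminf uu = (Sinf :: 'a fls fps)"
    unfolding qz_suminf_def by (rule qz_lim_eq[OF Ss_tendsto])
  define c :: "'a fls fps" where "c = 1 + zpow 2"
  have c0: "c $ 0 \<noteq> 0" using one_plus_Zsq_nz[where 'a='a] by (simp add: c_def zpow_def)
  have PB0: "(PB :: 'a fls fps) $ 0 \<noteq> 0"
  proof -
    have "(PB :: 'a fls fps) $ 0 = pw 1 $ 0" by (rule nth0_lim[OF eqm_pw])
    also have "\<dots> = 1 - fls_X" by (simp add: pw_def zpowm1_const)
    finally show ?thesis using one_minus_W_nz[where 'a='a] by simp
  qed
  have PB'0: "(PB' :: 'a fls fps) $ 0 \<noteq> 0"
  proof -
    have "(PB' :: 'a fls fps) $ 0 = pz 1 $ 0" by (rule nth0_lim[OF eqm_pz])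
    thus ?thesis by (simp add: pz_def)
  qed
  have PC_0: "(PC :: 'a fls fps) $ 0 \<noteq> 0"
  proof -
    have "(PC :: 'a fls fps) $ 0 = (\<Prod>j<1. 1 + zpow 2 * fps_X ^ (j + 1) :: 'a fls fps) $ 0"
      by (rule nth0_lim[OF eqm_pc])
    thus ?thesis by simp
  qed
  have PC'0: "(PC' :: 'a fls fps) $ 0 \<noteq> 0"
  proof -
    have "(PC' :: 'a fls fps) $ 0 = pc' 1 $ 0" by (rule nth0_lim[OF eqm_pc'])
    thus ?thesis by (simp add: pc'_def)
  qed
  have PD0: "(PD :: 'a fls fps) $ 0 \<noteq> 0" by (simp add: PD_nth0)
  have key: "PA * PA' * (inverse c * inverse PC * inverse PC') =
             PB * PB' * (inverse PD * inverse PD) * (inverse c + (Sinf :: 'a fls fps))"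
  proof -
    have "PA * PA' * inverse (PC0 * PC') = Ginf * (ta 0 + (Sinf :: 'a fls fps))"
      using Phi_eq by (simp add: Phi_def Tinf_def)
    moreover have "inverse (PC0 * PC') = inverse c * inverse PC * (inverse PC' :: 'a fls fps)"
      by (simp add: PC0_eq c_def fps_inverse_mult)
    moreover have "Ginf = PB * PB' * (inverse PD * inverse (PD :: 'a fls fps))"
      by (simp add: Ginf_def fps_inverse_mult)
    moreover have "ta 0 = (inverse c :: 'a fls fps)" by (simp add: ta_def c_def)
    ultimately show ?thesis by simp
  qed
  have main: "PA * PA' * (inverse PB * inverse PB') = PC * PC' * (inverse PD * inverse PD) * (1 + c * (Sinf :: 'a fls fps))"
    by (rule final_alg[OF _ _ _ _ _ key]) (simp_all add: inverse_mult_eq_1 PB0 PB'0 c0 PC_0 PC'0)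
  have lhs: "PA * PA' / (PB * PB') = PA * PA' * (inverse PB * inverse (PB' :: 'a fls fps))"
    using PB0 PB'0 by (simp add: fps_divide_unit fps_inverse_mult)
  have rhs: "PC * PC' / PD ^ 2 = PC * PC' * (inverse PD * inverse (PD :: 'a fls fps))"
    using PD0 by (simp add: fps_divide_unit fps_inverse_mult power2_eq_square)
  show ?thesis
    unfolding q_def sumeq S
    unfolding PA_def[symmetric] PA'_def[symmetric] PB_def[symmetric] PB'_def[symmetric]
      PC_def[symmetric] PC'_def[symmetric] PD_def[symmetric]
    unfolding lhs rhs main c_def ..
qed


end
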